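(* Let $K$ be a Cantor set with metric $d$. Let $T:K\to K$ be an endomorphism (respectively a homeomorphism), let $f:K\to\mathbb{R}$ be continuous and let $\varepsilon>0$. Then there exists an endomorphism (respectively a homeomorphism) $\widetilde T:K\to K$ with $\max_{x\in K} d(T(x),\widetilde T(x))<\varepsilon$ such that $\widetilde T$ has an $f$-maximizing measure supported on a periodic orbit.
   Context: A Cantor set is a nonempty totally disconnected, perfect, compact metric space. An endomorphism of $K$ is a continuous surjection $K\to K$. For a continuous map $S:K\to K$, let $M_S(K)$ be the set of $S$-invariant Borel probability measures on $K$; a measure $\mu\in M_S(K)$ is $f$-maximizing (for $S$) if $\int_K f\,d\mu=\max_{\nu\in M_S(K)}\int_K f\,d\nu$. *)

theory Defs
  imports "HOL-Analysis.Analysis" "HOL-Probability.Probability"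
begin

definition totally_disconnected :: "'a::topological_space set \<Rightarrow> bool" where
  "totally_disconnected K \<longleftrightarrow> (\<forall>S. S \<subseteq> K \<and> connected S \<longrightarrow> (\<exists>a. S \<subseteq> {a}))"

definition cantor_set :: "'a::metric_space set \<Rightarrow> bool" where
  "cantor_set K \<longleftrightarrow> K \<noteq> {} \<and> totally_disconnected K \<and> (\<forall>x\<in>K. x islimpt K) \<and> compact K"

definition endomorphism :: "'a::topological_space set \<Rightarrow> ('a \<Rightarrow> 'a) \<Rightarrow> bool" where
  "endomorphism K T \<longleftrightarrow> continuous_on K T \<and> T ` K = K"

definition homeomorphism_of :: "'a::topological_space set \<Rightarrow> ('a \<Rightarrow> 'a) \<Rightarrow> bool" where
  "homeomorphism_of K T \<longleftrightarrow> (\<exists>g. homeomorphism K K T g)"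

definition invariant_measures :: "'a::topological_space set \<Rightarrow> ('a \<Rightarrow> 'a) \<Rightarrow> 'a measure set" where
  "invariant_measures K S = {M. prob_space M \<and> sets M = sets (restrict_space borel K) \<and>
      (\<forall>A\<in>sets M. emeasure M (S -` A \<inter> K) = emeasure M A)}"

definition maximizing_measure :: "'a::topological_space set \<Rightarrow> ('a \<Rightarrow> 'a) \<Rightarrow> ('a \<Rightarrow> real) \<Rightarrow> 'a measure \<Rightarrow> bool" where
  "maximizing_measure K S f M \<longleftrightarrow> M \<in> invariant_measures K S \<and>
      (\<forall>N\<in>invariant_measures K S. integral\<^sup>L N f \<le> integral\<^sup>L M f)"

definition supported_on_periodic_orbit :: "'a set \<Rightarrow> ('a \<Rightarrow> 'a) \<Rightarrow> 'a measure \<Rightarrow> bool" where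
  "supported_on_periodic_orbit K S M \<longleftrightarrow> (\<exists>x\<in>K. \<exists>p::nat. p \<ge> 1 \<and> (S ^^ p) x = x \<and>
      emeasure M {(S ^^ n) x | n. n < p} = 1)"

end

theory Submission
  imports Defs
begin

definition clo :: "'a::metric_space set \<Rightarrow> 'a set \<Rightarrow> bool" where
  "clo X C \<longleftrightarrow> openin (top_of_set X) C \<and> closedin (top_of_set X) C"

lemma quasi_sing:
  fixes K :: "'a::metric_space set"
  assumes "compact K" "totally_disconnected K" "x \<in> K"
  shows "quasi_component_of_set (top_of_set K) x = {x}"
proof -
  let ?X = "top_of_set K"
  let ?Q = "quasi_component_of_set ?X x"
  have mem: "?Q \<in> quasi_components_of ?X"
    using assms(3) unfolding quasi_components_of_def by simp
  have cl: "closedin ?X ?Q" by (rule closedin_quasi_component_of)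
  have cs: "compact_space ?X" using assms(1) by (simp add: compact_space_subtopology)
  have cpt: "compactin ?X ?Q" using closedin_compact_space[OF cs cl] .
  have lc: "locally_compact_space ?X"
    using cs by (rule compact_imp_locally_compact_space)
  have hd: "Hausdorff_space ?X"
    by (rule Hausdorff_space_subtopology) (rule Hausdorff_space_euclidean)
  have "?Q \<in> connected_components_of ?X"
    using compact_quasi_eq_connected_components_of[OF lc hd cpt] mem by simp
  then have "connectedin ?X ?Q"
    by (rule connectedin_connected_components_of)
  then have "connected ?Q \<and> ?Q \<subseteq> K"
    unfolding connectedin_subtopology by simp
  then obtain a where "?Q \<subseteq> {a}"
    using assms(2) unfolding totally_disconnected_def by blast
  moreover have "x \<in> ?Q" using assms(3) by simp
  ultimately show ?thesis by blast
qed

lemma clopen_small: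
  fixes K :: "'a::metric_space set"
  assumes "compact K" "totally_disconnected K" "x \<in> K" "r > 0"
  shows "\<exists>C. clo K C \<and> x \<in> C \<and> C \<subseteq> ball x r"
proof -
  let ?X = "top_of_set K"
  have q: "quasi_component_of_set ?X x = {x}" using quasi_sing assms by blast
  have "\<forall>y\<in>K - ball x r. \<exists>T. clo K T \<and> y \<in> T \<and> x \<notin> T"
  proof
    fix y assume y: "y \<in> K - ball x r"
    then have "y \<noteq> x" using assms(4) by auto
    then have "\<not> quasi_component_of ?X x y" using q by auto
    then obtain T where T: "x \<in> T" "closedin ?X T" "openin ?X T" "y \<notin> T"
      using y assms(3) unfolding quasi_component_of by auto
    have "clo K (K - T)" using T(2,3) unfolding clo_def
      by (metis closedin_diff closedin_topspace openin_diff openin_topspace topspace_euclidean_subtopology)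
    then show "\<exists>T. clo K T \<and> y \<in> T \<and> x \<notin> T"
      using T(1,4) y by blast
  qed
  then obtain T where T0: "\<forall>y\<in>K - ball x r. clo K (T y) \<and> y \<in> T y \<and> x \<notin> T y"
    by (auto dest!: bchoice)
  have "compact (K - ball x r)" using assms(1) by (simp add: compact_diff)
  have "\<forall>y\<in>K - ball x r. \<exists>G. open G \<and> T y = K \<inter> G"
  proof
    fix y assume "y \<in> K - ball x r"
    then have "openin (top_of_set K) (T y)" using T0 unfolding clo_def by blast
    then show "\<exists>G. open G \<and> T y = K \<inter> G" by (auto simp: openin_open)
  qed
  then obtain G where O0: "\<forall>y\<in>K - ball x r. open (G y) \<and> T y = K \<inter> G y" by (auto dest!: bchoice)
  have cov: "K - ball x r \<subseteq> (\<Union>y\<in>K - ball x r. G y)" using O0 T0 by blast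
  obtain S where S: "S \<subseteq> K - ball x r" "finite S" "K - ball x r \<subseteq> (\<Union>y\<in>S. G y)"
    using compactE_image[OF \<open>compact (K - ball x r)\<close>, of "K - ball x r" G] O0 cov by blast
  define C where "C = K - (\<Union>y\<in>S. T y)"
  have "\<forall>y\<in>S. clo K (T y)" using S(1) T0 by blast
  then have "clo K (\<Union>y\<in>S. T y)"
    using S(2) unfolding clo_def by (auto intro!: openin_Union closedin_Union)
  then have "clo K C" unfolding C_def clo_def
    by (metis closedin_diff closedin_topspace openin_diff openin_topspace topspace_euclidean_subtopology)
  moreover have "\<forall>y\<in>S. x \<notin> T y" using S(1) T0 by blast
  then have "x \<in> C" using assms(3) unfolding C_def by blast
  moreover have "C \<subseteq> ball x r"
  proof
    fix z assume z: "z \<in> C"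
    show "z \<in> ball x r"
    proof (rule ccontr)
      assume "z \<notin> ball x r"
      then have "z \<in> K - ball x r" using z C_def by auto
      then obtain y where y: "y \<in> S" "z \<in> G y" using S by blast
      then have "y \<in> K - ball x r" using S by blast
      then have "z \<in> T y" using O0 y z C_def by blast
      then show False using z C_def y by blast
    qed
  qed
  ultimately show ?thesis by blast
qed

definition cantorlike :: "'a::metric_space set \<Rightarrow> bool" where
  "cantorlike X \<longleftrightarrow> compact X \<and> totally_disconnected X \<and> (\<forall>x\<in>X. x islimpt X)"

definition small :: "real \<Rightarrow> 'a::metric_space set \<Rightarrow> bool" where
  "small r C \<longleftrightarrow> (\<forall>u\<in>C. \<forall>v\<in>C. dist u v < r)"

definition partU :: "'a::metric_space set \<Rightarrow> real \<Rightarrow> 'a set set \<Rightarrow> 'a set \<Rightarrow> bool" where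
  "partU X r P U \<longleftrightarrow> finite P \<and> (\<forall>C\<in>P. clo X C \<and> C \<noteq> {} \<and> small r C) \<and> \<Union>P = U \<and>
     (\<forall>C\<in>P. \<forall>D\<in>P. C \<noteq> D \<longrightarrow> C \<inter> D = {})"

definition part :: "'a::metric_space set \<Rightarrow> real \<Rightarrow> 'a set set \<Rightarrow> bool" where
  "part X r P \<longleftrightarrow> finite P \<and> (\<forall>C\<in>P. clo X C \<and> C \<noteq> {} \<and> small r C) \<and> \<Union>P = X \<and>
     (\<forall>C\<in>P. \<forall>D\<in>P. C \<noteq> D \<longrightarrow> C \<inter> D = {})"

lemma clo_trans: "clo X A \<Longrightarrow> clo A C \<Longrightarrow> clo X C"
  unfolding clo_def by (meson openin_trans closedin_trans)

lemma clo_subset: "clo X C \<Longrightarrow> C \<subseteq> X"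
  unfolding clo_def using closedin_imp_subset by blast

lemma clo_diff: "clo X A \<Longrightarrow> clo X B \<Longrightarrow> clo X (A - B)"
  unfolding clo_def by (simp add: closedin_diff openin_diff)

lemma clo_Int: "clo X A \<Longrightarrow> clo X B \<Longrightarrow> clo X (A \<inter> B)"
  unfolding clo_def by (simp add: closedin_Int openin_Int)

lemma clo_Un: "clo X A \<Longrightarrow> clo X B \<Longrightarrow> clo X (A \<union> B)"
  unfolding clo_def by (simp add: closedin_Un openin_Un)

lemma clo_self: "clo X X"
  unfolding clo_def by (metis closedin_topspace openin_topspace topspace_euclidean_subtopology)

lemma cantorlike_clo:
  assumes "cantorlike X" "clo X C"
  shows "cantorlike C"
  unfolding cantorlike_def
proof (intro conjI ballI)
  have CX: "C \<subseteq> X" using assms(2) by (rule clo_subset)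
  show "compact C" using assms closedin_compact unfolding cantorlike_def clo_def by blast
  show "totally_disconnected C" unfolding totally_disconnected_def
  proof (intro allI impI)
    fix S assume "S \<subseteq> C \<and> connected S"
    then have "S \<subseteq> X \<and> connected S" using CX by blast
    then show "\<exists>a. S \<subseteq> {a}" using assms(1) unfolding cantorlike_def totally_disconnected_def by blast
  qed
  fix x assume x: "x \<in> C"
  then have xX: "x islimpt X" using assms(1) CX unfolding cantorlike_def by blast
  obtain e where e: "e > 0" "ball x e \<inter> X \<subseteq> C"
    using assms(2) x unfolding clo_def openin_contains_ball by blast
  show "x islimpt C"
    unfolding islimpt_approachable
  proof (intro allI impI)
    fix d :: real assume "d > 0"
    then have "min d e > 0" using e by simp
    then obtain y where y: "y \<in> X" "y \<noteq> x" "dist y x < min d e"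
      using xX unfolding islimpt_approachable by blast
    then have "y \<in> ball x e" by (simp add: dist_commute)
    then have "y \<in> C" using e y by blast
    then show "\<exists>x'\<in>C. x' \<noteq> x \<and> dist x' x < d"
      using y by auto
  qed
qed

lemma disjointify:
  assumes "finite F" "\<forall>C\<in>F. clo X C \<and> small r C"
  shows "\<exists>P. partU X r P (\<Union>F)"
  using assms unfolding partU_def
proof (induction F rule: finite_induct)
  case empty
  then show ?case by (intro exI[of _ "{}"], auto)
next
  case (insert A F)
  then obtain P where P: "finite P" "\<forall>C\<in>P. clo X C \<and> C \<noteq> {} \<and> small r C" "\<Union>P = \<Union>F"
     "\<forall>C\<in>P. \<forall>D\<in>P. C \<noteq> D \<longrightarrow> C \<inter> D = {}" by auto
  have A: "clo X A" "small r A" using insert.prems by auto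
  define P' where "P' = ((\<lambda>C. C - A) ` P \<union> {A}) - {{}}"
  have "finite P'" unfolding P'_def using P(1) by auto
  moreover have "\<forall>C\<in>P'. clo X C \<and> C \<noteq> {} \<and> small r C"
  proof
    fix C assume "C \<in> P'"
    then consider "C = A" "A \<noteq> {}" | D where "D \<in> P" "C = D - A" "C \<noteq> {}" unfolding P'_def by blast
    then show "clo X C \<and> C \<noteq> {} \<and> small r C"
    proof cases
      case 1 then show ?thesis using A by simp
    next
      case 2
      then have "clo X D" "small r D" using P(2) by auto
      have "clo X (D - A)" using clo_diff[OF \<open>clo X D\<close> A(1)] .
      moreover have "small r (D - A)" using \<open>small r D\<close> unfolding small_def by blast
      ultimately show ?thesis using 2 by simp
    qed
  qed
  moreover have "\<Union>P' = \<Union>(insert A F)"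
  proof -
    have "\<Union>P' = (\<Union>C\<in>P. C - A) \<union> A" unfolding P'_def by blast
    also have "\<dots> = \<Union>P \<union> A" by blast
    finally show ?thesis using P(3) by blast
  qed
  moreover have "\<forall>C\<in>P'. \<forall>D\<in>P'. C \<noteq> D \<longrightarrow> C \<inter> D = {}"
  proof (intro ballI impI)
    fix C D assume "C \<in> P'" "D \<in> P'" "C \<noteq> D"
    then consider "C = A" | C' where "C' \<in> P" "C = C' - A" unfolding P'_def by blast
    moreover consider "D = A" | D' where "D' \<in> P" "D = D' - A" using \<open>D \<in> P'\<close> unfolding P'_def by blast
    ultimately show "C \<inter> D = {}"
    proof cases
      case 1 then show ?thesis using \<open>C \<noteq> D\<close> \<open>D \<in> P'\<close> unfolding P'_def by auto
    next
      case (2 C')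
      then show ?thesis
      proof -
        from \<open>D \<in> P'\<close> consider "D = A" | D' where "D' \<in> P" "D = D' - A" unfolding P'_def by blast
        then show ?thesis
        proof cases
          case 1 then show ?thesis using 2 by auto
        next
          case (2 D')
          then have "C' \<noteq> D'" using \<open>C \<noteq> D\<close> \<open>C = C' - A\<close> by auto
          then have "C' \<inter> D' = {}" using P(4) \<open>C' \<in> P\<close> 2 by blast
          then show ?thesis using 2 \<open>C = C' - A\<close> by auto
        qed
      qed
    qed
  qed
  ultimately show ?case by blast
qed

lemma part_exists:
  assumes "cantorlike X" "r > 0"
  shows "\<exists>P. part X r P"
proof -
  have "\<forall>x\<in>X. \<exists>C. clo X C \<and> x \<in> C \<and> C \<subseteq> ball x (r/2)"
  proof
    fix x assume x: "x \<in> X"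
    have "r/2 > 0" using assms(2) by simp
    then show "\<exists>C. clo X C \<and> x \<in> C \<and> C \<subseteq> ball x (r/2)"
      using clopen_small[of X x "r/2"] assms(1) x unfolding cantorlike_def by blast
  qed
  then obtain C where C: "\<forall>x\<in>X. clo X (C x) \<and> x \<in> C x \<and> C x \<subseteq> ball x (r/2)"
    by (auto dest!: bchoice)
  have "\<forall>x\<in>X. \<exists>G. open G \<and> C x = X \<inter> G"
    using C unfolding clo_def by (auto simp: openin_open)
  then obtain G where G: "\<forall>x\<in>X. open (G x) \<and> C x = X \<inter> G x" by (auto dest!: bchoice)
  have cov: "X \<subseteq> (\<Union>x\<in>X. G x)" using C G by blast
  have cX: "compact X" using assms(1) unfolding cantorlike_def by blast
  have oG: "\<And>x. x \<in> X \<Longrightarrow> open (G x)" using G by blast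
  obtain S where S: "S \<subseteq> X" "finite S" "X \<subseteq> (\<Union>x\<in>S. G x)"
    using compactE_image[OF cX oG cov] by blast
  have sm: "\<forall>x\<in>X. small r (C x)"
  proof
    fix x assume x: "x \<in> X"
    show "small r (C x)" unfolding small_def
    proof (intro ballI)
      fix u v assume "u \<in> C x" "v \<in> C x"
      then have "u \<in> ball x (r/2)" "v \<in> ball x (r/2)" using C x by blast+
      then have "dist x u < r/2" "dist x v < r/2" by simp_all
      then show "dist u v < r" by (metric)
    qed
  qed
  have "\<forall>D\<in>C ` S. clo X D \<and> small r D" using S(1) C sm by blast
  from disjointify[OF finite_imageI[OF S(2)] this]
  obtain P where P0: "partU X r P (\<Union>(C ` S))" by blast
  then have P: "finite P" "\<forall>D\<in>P. clo X D \<and> D \<noteq> {} \<and> small r D" "\<Union>P = \<Union>(C ` S)"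
     "\<forall>D\<in>P. \<forall>E\<in>P. D \<noteq> E \<longrightarrow> D \<inter> E = {}"
    unfolding partU_def by auto
  have "\<Union>(C ` S) = X"
  proof
    show "\<Union>(C ` S) \<subseteq> X" using S(1) C clo_subset by blast
    show "X \<subseteq> \<Union>(C ` S)" using S G by blast
  qed
  then show ?thesis using P unfolding part_def by auto
qed

lemma split_clo:
  assumes "cantorlike X" "clo X C" "a \<in> C"
  shows "\<exists>C1 C2. clo X C1 \<and> clo X C2 \<and> C1 \<noteq> {} \<and> C2 \<noteq> {} \<and> C1 \<inter> C2 = {} \<and> C1 \<union> C2 = C \<and> a \<in> C1"
proof -
  have "cantorlike C" using assms cantorlike_clo by blast
  then have "a islimpt C" using assms(3) unfolding cantorlike_def by blast
  then have "\<exists>b\<in>C. b \<noteq> a \<and> dist b a < 1" unfolding islimpt_approachable by simp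
  then obtain b where b: "b \<in> C" "b \<noteq> a" by blast
  have "a \<in> X" using assms clo_subset by blast
  obtain D where D: "clo X D" "a \<in> D" "D \<subseteq> ball a (dist a b)"
    using clopen_small[of X a "dist a b"] assms(1) \<open>a \<in> X\<close> b unfolding cantorlike_def by auto
  have "b \<notin> D" using D by auto
  have 1: "clo X (C \<inter> D)" using clo_Int[OF assms(2) D(1)] .
  have 2: "clo X (C - D)" using clo_diff[OF assms(2) D(1)] .
  have 3: "C \<inter> D \<noteq> {}" "C - D \<noteq> {}" "a \<in> C \<inter> D" using D(2) assms(3) b(1) \<open>b \<notin> D\<close> by auto
  have 4: "(C \<inter> D) \<inter> (C - D) = {}" "(C \<inter> D) \<union> (C - D) = C" by auto
  show ?thesis using 1 2 3 4 by blast
qed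

lemma part_grow:
  assumes "cantorlike X" "X \<noteq> {}" "part X r P" "card P \<le> N"
  shows "\<exists>P'. part X r P' \<and> card P' = N"
  using assms(4)
proof (induction N rule: dec_induct)
  case base
  then show ?case using assms(3) by blast
next
  case (step n)
  then obtain P' where P': "part X r P'" "card P' = n" by blast
  then have "P' \<noteq> {}" using assms(2) unfolding part_def by auto
  then obtain C where C: "C \<in> P'" by blast
  then have Cp: "clo X C" "C \<noteq> {}" "small r C" using P' unfolding part_def by auto
  then obtain a where "a \<in> C" by blast
  then obtain C1 C2 where S: "clo X C1" "clo X C2" "C1 \<noteq> {}" "C2 \<noteq> {}" "C1 \<inter> C2 = {}" "C1 \<union> C2 = C"
    using split_clo assms(1) Cp by blast
  define P'' where "P'' = insert C1 (insert C2 (P' - {C}))"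
  have fin: "finite P'" using P' unfolding part_def by auto
  have n1: "C1 \<notin> P' - {C}"
  proof
    assume "C1 \<in> P' - {C}"
    then have "C1 \<inter> C = {}" using P' C unfolding part_def by auto
    then show False using S by blast
  qed
  have n2: "C2 \<notin> P' - {C}"
  proof
    assume "C2 \<in> P' - {C}"
    then have "C2 \<inter> C = {}" using P' C unfolding part_def by auto
    then show False using S by blast
  qed
  have "C1 \<noteq> C2" using S by blast
  have "card P' > 0" using fin C by (auto simp: card_gt_0_iff)
  then have "card P'' = Suc n"
    unfolding P''_def using n1 n2 fin C P'(2) \<open>C1 \<noteq> C2\<close> by (simp add: card.insert_remove)
  moreover have "part X r P''"
  proof -
    have sm: "small r C1" "small r C2" using Cp(3) S(6) unfolding small_def by blast+
    have "\<forall>D\<in>P''. clo X D \<and> D \<noteq> {} \<and> small r D"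
      unfolding P''_def using P' S sm unfolding part_def by auto
    moreover have "\<Union>P'' = X"
      unfolding P''_def using P' S C unfolding part_def by auto
    moreover have "\<forall>D\<in>P''. \<forall>E\<in>P''. D \<noteq> E \<longrightarrow> D \<inter> E = {}"
    proof (intro ballI impI)
      fix D E assume D: "D \<in> P''" and E: "E \<in> P''" and DE: "D \<noteq> E"
      have X1: "\<forall>F\<in>P' - {C}. F \<inter> C = {}" using P' C unfolding part_def by auto
      have X2: "\<forall>F\<in>P' - {C}. \<forall>G\<in>P' - {C}. F \<noteq> G \<longrightarrow> F \<inter> G = {}" using P' unfolding part_def by auto
      have c12: "C1 \<subseteq> C" "C2 \<subseteq> C" using S(6) by auto
      have r: "R \<in> P' - {C} \<Longrightarrow> R \<inter> C1 = {} \<and> R \<inter> C2 = {}" for R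
        using X1 c12 by blast
      from D E show "D \<inter> E = {}" unfolding P''_def
      proof (elim insertE)
        assume "D = C1" "E = C2" then show ?thesis using S(5) by simp
      next
        assume "D = C2" "E = C1" then show ?thesis using S(5) by auto
      next
        assume "D = C1" "E = C1" then show ?thesis using DE by simp
      next
        assume "D = C2" "E = C2" then show ?thesis using DE by simp
      next
        assume "D = C1" "E \<in> P' - {C}" then show ?thesis using r[of E] by auto
      next
        assume "D = C2" "E \<in> P' - {C}" then show ?thesis using r[of E] by auto
      next
        assume "D \<in> P' - {C}" "E = C1" then show ?thesis using r[of D] by auto
      next
        assume "D \<in> P' - {C}" "E = C2" then show ?thesis using r[of D] by auto
      next
        assume "D \<in> P' - {C}" "E \<in> P' - {C}" then show ?thesis using X2 DE by blast
      qed
    qed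
    ultimately show ?thesis unfolding part_def P''_def using fin by auto
  qed
  ultimately show ?case by blast
qed

definition goodS :: "'a::metric_space set \<Rightarrow> 'a set \<Rightarrow> ('a set \<times> 'a set) set \<Rightarrow> bool" where
  "goodS X Y R \<longleftrightarrow> finite R \<and> (\<forall>p\<in>R. clo X (fst p) \<and> clo Y (snd p) \<and> fst p \<noteq> {} \<and> snd p \<noteq> {}) \<and>
     \<Union>(fst ` R) = X \<and> \<Union>(snd ` R) = Y \<and>
     (\<forall>p\<in>R. \<forall>q\<in>R. p \<noteq> q \<longrightarrow> fst p \<inter> fst q = {} \<and> snd p \<inter> snd q = {})"

definition smallR :: "real \<Rightarrow> ('a::metric_space set \<times> 'a set) set \<Rightarrow> bool" where
  "smallR r R \<longleftrightarrow> (\<forall>p\<in>R. small r (fst p) \<and> small r (snd p))"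

definition anch :: "'a \<Rightarrow> 'a \<Rightarrow> ('a set \<times> 'a set) set \<Rightarrow> bool" where
  "anch a b R \<longleftrightarrow> (\<exists>p\<in>R. a \<in> fst p \<and> b \<in> snd p)"

definition refines :: "('a set \<times> 'a set) set \<Rightarrow> ('a set \<times> 'a set) set \<Rightarrow> bool" where
  "refines R' R \<longleftrightarrow> (\<forall>p'\<in>R'. \<exists>p\<in>R. fst p' \<subseteq> fst p \<and> snd p' \<subseteq> snd p)"

lemma pair_part:
  fixes X Y :: "'a::metric_space set"
  assumes X: "cantorlike X" and Y: "cantorlike Y" and a: "a \<in> X" and b: "b \<in> Y" and r: "r > 0"
  shows "\<exists>R. goodS X Y R \<and> smallR r R \<and> anch a b R"
proof -
  obtain P0 where P0: "part X r P0" using part_exists[OF X r] by blast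
  obtain Q0 where Q0: "part Y r Q0" using part_exists[OF Y r] by blast
  define N where "N = max (card P0) (card Q0)"
  have "X \<noteq> {}" "Y \<noteq> {}" using a b by auto
  obtain P where P: "part X r P" "card P = N"
    using part_grow[OF X \<open>X \<noteq> {}\<close> P0, of N] unfolding N_def by auto
  obtain Q where Q: "part Y r Q" "card Q = N"
    using part_grow[OF Y \<open>Y \<noteq> {}\<close> Q0, of N] unfolding N_def by auto
  have Pp: "finite P" "\<forall>C\<in>P. clo X C \<and> C \<noteq> {} \<and> small r C" "\<Union>P = X"
     "\<forall>C\<in>P. \<forall>D\<in>P. C \<noteq> D \<longrightarrow> C \<inter> D = {}" using P(1) unfolding part_def by auto
  have Qp: "finite Q" "\<forall>C\<in>Q. clo Y C \<and> C \<noteq> {} \<and> small r C" "\<Union>Q = Y"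
     "\<forall>C\<in>Q. \<forall>D\<in>Q. C \<noteq> D \<longrightarrow> C \<inter> D = {}" using Q(1) unfolding part_def by auto
  obtain Pa where Pa: "Pa \<in> P" "a \<in> Pa" using Pp(3) a by blast
  obtain Qb where Qb: "Qb \<in> Q" "b \<in> Qb" using Qp(3) b by blast
  have "card (P - {Pa}) = card (Q - {Qb})"
    using Pa(1) Qb(1) Pp(1) Qp(1) P(2) Q(2) by simp
  then obtain f where f: "bij_betw f (P - {Pa}) (Q - {Qb})"
    using finite_same_card_bij Pp(1) Qp(1) by (metis finite_Diff)
  define g where "g C = (if C = Pa then Qb else f C)" for C
  have gQ: "C \<in> P \<Longrightarrow> g C \<in> Q" for C
    unfolding g_def using f Qb(1) bij_betwE by fastforce
  have ginj: "C \<in> P \<Longrightarrow> D \<in> P \<Longrightarrow> g C = g D \<Longrightarrow> C = D" for C D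
  proof -
    assume CD: "C \<in> P" "D \<in> P" "g C = g D"
    have fi: "inj_on f (P - {Pa})" using f bij_betw_def by blast
    have fr: "E \<in> P - {Pa} \<Longrightarrow> f E \<in> Q - {Qb}" for E using f bij_betwE by blast
    show "C = D"
    proof (cases "C = Pa")
      case True
      then show ?thesis
      proof (cases "D = Pa")
        case False
        then have "f D \<noteq> Qb" using fr CD(2) by blast
        then show ?thesis using CD True False unfolding g_def by simp
      qed simp
    next
      case False
      then show ?thesis
      proof (cases "D = Pa")
        case True
        then have "f C \<noteq> Qb" using fr CD(1) False by blast
        then show ?thesis using CD True False unfolding g_def by simp
      next
        case False2: False
        then have "f C = f D" using CD False unfolding g_def by simp
        then show ?thesis using fi CD False False2 unfolding inj_on_def by blast
      qed
    qed
  qed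
  have gsurj: "Q \<subseteq> g ` P"
  proof
    fix E assume E: "E \<in> Q"
    show "E \<in> g ` P"
    proof (cases "E = Qb")
      case True
      then show ?thesis using Pa(1) unfolding g_def by force
    next
      case False
      then have "E \<in> f ` (P - {Pa})" using f E unfolding bij_betw_def by blast
      then obtain C where "C \<in> P - {Pa}" "E = f C" by blast
      then show ?thesis unfolding g_def by force
    qed
  qed
  define R where "R = (\<lambda>C. (C, g C)) ` P"
  have "goodS X Y R" unfolding goodS_def
  proof (intro conjI)
    show "finite R" unfolding R_def using Pp(1) by simp
    show "\<forall>p\<in>R. clo X (fst p) \<and> clo Y (snd p) \<and> fst p \<noteq> {} \<and> snd p \<noteq> {}"
      unfolding R_def using Pp(2) Qp(2) gQ by auto
    show "\<Union>(fst ` R) = X" unfolding R_def using Pp(3) by force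
    have "snd ` R = g ` P" unfolding R_def by force
    moreover have "g ` P = Q" using gQ gsurj by blast
    ultimately show "\<Union>(snd ` R) = Y" using Qp(3) by simp
    show "\<forall>p\<in>R. \<forall>q\<in>R. p \<noteq> q \<longrightarrow> fst p \<inter> fst q = {} \<and> snd p \<inter> snd q = {}"
    proof (intro ballI impI)
      fix p q assume "p \<in> R" "q \<in> R" "p \<noteq> q"
      then obtain C D where CD: "C \<in> P" "D \<in> P" "p = (C, g C)" "q = (D, g D)" unfolding R_def by blast
      then have "C \<noteq> D" using \<open>p \<noteq> q\<close> by blast
      then have "g C \<noteq> g D" using ginj CD by blast
      then show "fst p \<inter> fst q = {} \<and> snd p \<inter> snd q = {}"
        using CD \<open>C \<noteq> D\<close> Pp(4) Qp(4) gQ by simp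
    qed
  qed
  moreover have "smallR r R" unfolding smallR_def R_def using Pp(2) Qp(2) gQ by auto
  moreover have "anch a b R" unfolding anch_def R_def using Pa Qb unfolding g_def by force
  ultimately show ?thesis by blast
qed

lemma goodS_unique_fst:
  assumes "goodS X Y R" "p \<in> R" "q \<in> R" "x \<in> fst p" "x \<in> fst q"
  shows "p = q"
  using assms unfolding goodS_def by blast

lemma goodS_unique_snd:
  assumes "goodS X Y R" "p \<in> R" "q \<in> R" "x \<in> snd p" "x \<in> snd q"
  shows "p = q"
  using assms unfolding goodS_def by blast

lemma goodS_ex_fst:
  assumes "goodS X Y R" "x \<in> X"
  shows "\<exists>p\<in>R. x \<in> fst p"
  using assms unfolding goodS_def by blast

lemma step_part:
  fixes X Y :: "'a::metric_space set"
  assumes X: "cantorlike X" and Y: "cantorlike Y" and R: "goodS X Y R" and an: "anch a b R" and r: "r > 0"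
  shows "\<exists>R'. goodS X Y R' \<and> smallR r R' \<and> anch a b R' \<and> refines R' R"
proof -
  obtain p0 where p0: "p0 \<in> R" "a \<in> fst p0" "b \<in> snd p0" using an unfolding anch_def by blast
  define pt where "pt p = (if a \<in> fst p then (a, b) else (SOME x. x \<in> fst p, SOME y. y \<in> snd p))" for p
  have Rp: "\<forall>p\<in>R. clo X (fst p) \<and> clo Y (snd p) \<and> fst p \<noteq> {} \<and> snd p \<noteq> {}"
    using R unfolding goodS_def by blast
  have ptin: "fst (pt p) \<in> fst p \<and> snd (pt p) \<in> snd p" if p: "p \<in> R" for p
  proof (cases "a \<in> fst p")
    case True
    have "p = p0" by (rule goodS_unique_fst[OF R p p0(1) True p0(2)])
    then show ?thesis using True p0 unfolding pt_def by simp
  next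
    case False
    have "fst p \<noteq> {}" "snd p \<noteq> {}" using Rp p by auto
    then show ?thesis using False unfolding pt_def by (simp add: some_in_eq)
  qed
  have "\<forall>p\<in>R. \<exists>Q. goodS (fst p) (snd p) Q \<and> smallR r Q \<and> anch (fst (pt p)) (snd (pt p)) Q"
  proof
    fix p assume p: "p \<in> R"
    have "cantorlike (fst p)" using cantorlike_clo[OF X] Rp p by blast
    moreover have "cantorlike (snd p)" using cantorlike_clo[OF Y] Rp p by blast
    ultimately show "\<exists>Q. goodS (fst p) (snd p) Q \<and> smallR r Q \<and> anch (fst (pt p)) (snd (pt p)) Q"
      using pair_part[OF _ _ _ _ r] ptin[OF p] by blast
  qed
  then obtain Qf where Qf: "\<forall>p\<in>R. goodS (fst p) (snd p) (Qf p) \<and> smallR r (Qf p) \<and> anch (fst (pt p)) (snd (pt p)) (Qf p)"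
    by (auto dest!: bchoice)
  have Qg: "p \<in> R \<Longrightarrow> goodS (fst p) (snd p) (Qf p)" for p using Qf by blast
  have sub: "p \<in> R \<Longrightarrow> p' \<in> Qf p \<Longrightarrow> fst p' \<subseteq> fst p \<and> snd p' \<subseteq> snd p" for p p'
    using Qg unfolding goodS_def by blast
  define R' where "R' = (\<Union>p\<in>R. Qf p)"
  have "goodS X Y R'" unfolding goodS_def
  proof (intro conjI)
    have "finite R" using R unfolding goodS_def by blast
    moreover have "\<forall>p\<in>R. finite (Qf p)" using Qg unfolding goodS_def by blast
    ultimately show "finite R'" unfolding R'_def by blast
    show "\<forall>p'\<in>R'. clo X (fst p') \<and> clo Y (snd p') \<and> fst p' \<noteq> {} \<and> snd p' \<noteq> {}"
    proof
      fix p' assume "p' \<in> R'"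
      then obtain p where p: "p \<in> R" "p' \<in> Qf p" unfolding R'_def by blast
      have "\<forall>q\<in>Qf p. clo (fst p) (fst q) \<and> clo (snd p) (snd q) \<and> fst q \<noteq> {} \<and> snd q \<noteq> {}"
        using Qg[OF p(1)] unfolding goodS_def by simp
      then have "clo (fst p) (fst p') \<and> clo (snd p) (snd p') \<and> fst p' \<noteq> {} \<and> snd p' \<noteq> {}"
        using p(2) by blast
      moreover have "clo X (fst p)" "clo Y (snd p)" using Rp p(1) by auto
      ultimately show "clo X (fst p') \<and> clo Y (snd p') \<and> fst p' \<noteq> {} \<and> snd p' \<noteq> {}"
        using clo_trans by blast
    qed
    have "\<Union>(fst ` R') = (\<Union>p\<in>R. \<Union>(fst ` Qf p))" unfolding R'_def by blast
    also have "\<dots> = (\<Union>p\<in>R. fst p)" using Qg unfolding goodS_def by simp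
    also have "\<dots> = X" using R unfolding goodS_def by simp
    finally show "\<Union>(fst ` R') = X" .
    have "\<Union>(snd ` R') = (\<Union>p\<in>R. \<Union>(snd ` Qf p))" unfolding R'_def by blast
    also have "\<dots> = (\<Union>p\<in>R. snd p)" using Qg unfolding goodS_def by simp
    also have "\<dots> = Y" using R unfolding goodS_def by simp
    finally show "\<Union>(snd ` R') = Y" .
    show "\<forall>p'\<in>R'. \<forall>q'\<in>R'. p' \<noteq> q' \<longrightarrow> fst p' \<inter> fst q' = {} \<and> snd p' \<inter> snd q' = {}"
    proof (intro ballI impI)
      fix p' q' assume "p' \<in> R'" "q' \<in> R'" "p' \<noteq> q'"
      then obtain p q where pq: "p \<in> R" "p' \<in> Qf p" "q \<in> R" "q' \<in> Qf q" unfolding R'_def by blast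
      show "fst p' \<inter> fst q' = {} \<and> snd p' \<inter> snd q' = {}"
      proof (cases "p = q")
        case True
        then show ?thesis using Qg[OF pq(1)] pq \<open>p' \<noteq> q'\<close> unfolding goodS_def by blast
      next
        case False
        then have "fst p \<inter> fst q = {} \<and> snd p \<inter> snd q = {}" using R pq unfolding goodS_def by blast
        moreover have "fst p' \<subseteq> fst p \<and> snd p' \<subseteq> snd p" using sub pq by blast
        moreover have "fst q' \<subseteq> fst q \<and> snd q' \<subseteq> snd q" using sub pq by blast
        ultimately show ?thesis by blast
      qed
    qed
  qed
  moreover have "smallR r R'" unfolding R'_def smallR_def using Qf unfolding smallR_def by blast
  moreover have "anch a b R'"
  proof -
    have "pt p0 = (a, b)" using p0 unfolding pt_def by simp
    then have "anch a b (Qf p0)" using Qf p0(1) by fastforce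
    then show ?thesis unfolding anch_def R'_def using p0(1) by blast
  qed
  moreover have "refines R' R" unfolding refines_def R'_def using sub by blast
  ultimately show ?thesis by blast
qed

lemma goodS_swap:
  assumes "goodS X Y R" shows "goodS Y X (prod.swap ` R)"
proof -
  have im: "fst ` (prod.swap ` R) = snd ` R" "snd ` (prod.swap ` R) = fst ` R"
    by (simp_all add: image_image)
  have A: "finite R" "\<forall>p\<in>R. clo X (fst p) \<and> clo Y (snd p) \<and> fst p \<noteq> {} \<and> snd p \<noteq> {}"
     "\<Union>(fst ` R) = X" "\<Union>(snd ` R) = Y"
     "\<forall>p\<in>R. \<forall>q\<in>R. p \<noteq> q \<longrightarrow> fst p \<inter> fst q = {} \<and> snd p \<inter> snd q = {}"
    using assms unfolding goodS_def by auto
  have B: "\<forall>p\<in>prod.swap ` R. clo Y (fst p) \<and> clo X (snd p) \<and> fst p \<noteq> {} \<and> snd p \<noteq> {}"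
    using A(2) by auto
  have C: "\<forall>p\<in>prod.swap ` R. \<forall>q\<in>prod.swap ` R. p \<noteq> q \<longrightarrow> fst p \<inter> fst q = {} \<and> snd p \<inter> snd q = {}"
  proof (intro ballI impI)
    fix p q assume "p \<in> prod.swap ` R" "q \<in> prod.swap ` R" "p \<noteq> q"
    then obtain p1 q1 where "p1 \<in> R" "q1 \<in> R" "p = prod.swap p1" "q = prod.swap q1" by blast
    moreover have "p1 \<noteq> q1" using \<open>p \<noteq> q\<close> calculation by blast
    ultimately show "fst p \<inter> fst q = {} \<and> snd p \<inter> snd q = {}" using A(5) by auto
  qed
  show ?thesis unfolding goodS_def using A B C im by simp
qed

lemma smallR_swap: "smallR r R \<Longrightarrow> smallR r (prod.swap ` R)"
  unfolding smallR_def by auto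

lemma refines_swap: "refines R' R \<Longrightarrow> refines (prod.swap ` R') (prod.swap ` R)"
  unfolding refines_def by force

lemma G_fst:
  fixes S :: "nat \<Rightarrow> ('a::metric_space set \<times> 'a set) set"
  assumes cY: "compact Y" and g: "\<And>n. goodS X Y (S n)"
    and sm: "\<And>n. smallR (1 / real (Suc n)) (S (Suc n))" and rf: "\<And>n. refines (S (Suc n)) (S n)"
  shows "\<exists>\<phi>. (\<forall>x\<in>X. \<phi> x \<in> Y \<and> (\<forall>n. \<forall>p\<in>S n. x \<in> fst p \<longrightarrow> \<phi> x \<in> snd p)) \<and> continuous_on X \<phi>"
proof -
  have ex: "\<exists>y. y \<in> Y \<and> (\<forall>n. \<forall>p\<in>S n. x \<in> fst p \<longrightarrow> y \<in> snd p)" if x: "x \<in> X" for x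
  proof -
    define pf where "pf n = (SOME p. p \<in> S n \<and> x \<in> fst p)" for n
    have pf: "pf n \<in> S n \<and> x \<in> fst (pf n)" for n
    proof -
      have "\<exists>p. p \<in> S n \<and> x \<in> fst p" using goodS_ex_fst[OF g x] by blast
      then show ?thesis unfolding pf_def by (rule someI_ex)
    qed
    define B where "B n = snd (pf n)" for n
    have Bn: "clo Y (B n) \<and> B n \<noteq> {}" for n
    proof -
      have "\<forall>p\<in>S n. clo Y (snd p) \<and> snd p \<noteq> {}" using g[of n] unfolding goodS_def by blast
      then show ?thesis using pf[of n] unfolding B_def by blast
    qed
    have nest: "B (Suc n) \<subseteq> B n" for n
    proof -
      obtain q where q: "q \<in> S n" "fst (pf (Suc n)) \<subseteq> fst q" "snd (pf (Suc n)) \<subseteq> snd q"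
        using rf[of n] pf[of "Suc n"] unfolding refines_def by blast
      then have "x \<in> fst q" using pf[of "Suc n"] by blast
      then have "q = pf n" using goodS_unique_fst[OF g q(1) _ _ ] pf[of n] by blast
      then show ?thesis using q unfolding B_def by simp
    qed
    have nest2: "n \<le> m \<Longrightarrow> B m \<subseteq> B n" for n m
      using lift_Suc_antimono_le[of B, OF nest] by blast
    have clB: "closed (B n)" for n
    proof -
      have "closedin (top_of_set Y) (B n)" using Bn[of n] unfolding clo_def by blast
      then show ?thesis using closedin_closed_trans compact_imp_closed[OF cY] by blast
    qed
    have BY: "B n \<subseteq> Y" for n using Bn[of n] clo_subset by blast
    have "Y \<inter> \<Inter>(range B) \<noteq> {}"
    proof (rule compact_imp_fip[OF cY])
      show "\<And>T. T \<in> range B \<Longrightarrow> closed T" using clB by blast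
      fix F' assume F': "finite F'" "F' \<subseteq> range B"
      then obtain N where N: "finite N" "F' = B ` N" by (meson finite_subset_image)
      show "Y \<inter> \<Inter>F' \<noteq> {}"
      proof (cases "N = {}")
        case True
        then show ?thesis using N Bn[of 0] BY[of 0] by auto
      next
        case False
        define m where "m = Max N"
        have "\<forall>k\<in>N. B m \<subseteq> B k" using nest2 N(1) unfolding m_def by simp
        then have "B m \<subseteq> Y \<inter> \<Inter>F'" using N(2) BY[of m] by blast
        then show ?thesis using Bn[of m] by blast
      qed
    qed
    then obtain y where y: "y \<in> Y" "\<forall>n. y \<in> B n" by blast
    have "\<forall>n. \<forall>p\<in>S n. x \<in> fst p \<longrightarrow> y \<in> snd p"
    proof (intro allI ballI impI)
      fix n p assume "p \<in> S n" "x \<in> fst p"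
      then have "p = pf n" using goodS_unique_fst[OF g _ _ _] pf[of n] by blast
      then show "y \<in> snd p" using y unfolding B_def by simp
    qed
    then show ?thesis using y by blast
  qed
  then have "\<forall>x\<in>X. \<exists>y. y \<in> Y \<and> (\<forall>n. \<forall>p\<in>S n. x \<in> fst p \<longrightarrow> y \<in> snd p)" by blast
  then obtain \<phi> where phi: "\<forall>x\<in>X. \<phi> x \<in> Y \<and> (\<forall>n. \<forall>p\<in>S n. x \<in> fst p \<longrightarrow> \<phi> x \<in> snd p)"
    by (auto dest!: bchoice)
  have "continuous_on X \<phi>"
    unfolding continuous_on_iff
  proof (intro ballI allI impI)
    fix x and e :: real assume x: "x \<in> X" and e: "e > 0"
    obtain n where n: "inverse (real (Suc n)) < e" using reals_Archimedean[OF e] by blast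
    obtain p where p: "p \<in> S (Suc n)" "x \<in> fst p" using goodS_ex_fst[OF g x] by blast
    have "openin (top_of_set X) (fst p)" using g[of "Suc n"] p(1) unfolding goodS_def clo_def by blast
    then obtain d where d: "d > 0" "ball x d \<inter> X \<subseteq> fst p"
      using p(2) unfolding openin_contains_ball by blast
    have smp: "small (1 / real (Suc n)) (snd p)" using sm[of n] p(1) unfolding smallR_def by blast
    show "\<exists>d>0. \<forall>x'\<in>X. dist x' x < d \<longrightarrow> dist (\<phi> x') (\<phi> x) < e"
    proof (intro exI[of _ d] conjI ballI impI)
      show "d > 0" by (rule d(1))
      fix x' assume x': "x' \<in> X" "dist x' x < d"
      then have "x' \<in> fst p" using d(2) by (auto simp: dist_commute)
      then have "\<phi> x' \<in> snd p" using phi x' p(1) by blast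
      moreover have "\<phi> x \<in> snd p" using phi x p by blast
      ultimately have "dist (\<phi> x') (\<phi> x) < 1 / real (Suc n)" using smp unfolding small_def by blast
      then show "dist (\<phi> x') (\<phi> x) < e" using n by (simp add: inverse_eq_divide)
    qed
  qed
  then show ?thesis using phi by blast
qed

lemma U_fst:
  fixes S :: "nat \<Rightarrow> ('a::metric_space set \<times> 'a set) set"
  assumes g: "\<And>n. goodS X Y (S n)"
    and sm: "\<And>n. smallR (1 / real (Suc n)) (S (Suc n))"
    and x: "x \<in> X" and h: "\<forall>n. \<forall>p\<in>S n. x \<in> fst p \<longrightarrow> z \<in> fst p"
  shows "z = x"
proof (rule ccontr)
  assume "z \<noteq> x"
  then have "dist x z > 0" by simp
  then obtain n where n: "inverse (real (Suc n)) < dist x z" using reals_Archimedean by blast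
  obtain p where p: "p \<in> S (Suc n)" "x \<in> fst p" using goodS_ex_fst[OF g x] by blast
  then have "z \<in> fst p" using h by blast
  moreover have "small (1 / real (Suc n)) (fst p)" using sm[of n] p(1) unfolding smallR_def by blast
  ultimately have "dist x z < 1 / real (Suc n)" using p(2) unfolding small_def by blast
  then show False using n by (simp add: inverse_eq_divide)
qed

lemma homog:
  fixes X Y :: "'a::metric_space set"
  assumes X: "cantorlike X" and Y: "cantorlike Y" and a: "a \<in> X" and b: "b \<in> Y"
  shows "\<exists>\<phi> \<psi>. homeomorphism X Y \<phi> \<psi> \<and> \<phi> a = b"
proof -
  define S where "S = rec_nat {(X, Y)} (\<lambda>n R. SOME R'. goodS X Y R' \<and> smallR (1 / real (Suc n)) R' \<and> anch a b R' \<and> refines R' R)"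
  have S0: "S 0 = {(X, Y)}" unfolding S_def by simp
  have SS: "S (Suc n) = (SOME R'. goodS X Y R' \<and> smallR (1 / real (Suc n)) R' \<and> anch a b R' \<and> refines R' (S n))" for n
    unfolding S_def by simp
  have inv: "goodS X Y (S n) \<and> anch a b (S n)" for n
  proof (induction n)
    case 0
    have "clo X X" "clo Y Y" by (rule clo_self)+
    then show ?case unfolding S0 goodS_def anch_def using a b by auto
  next
    case (Suc n)
    have "\<exists>R'. goodS X Y R' \<and> smallR (1 / real (Suc n)) R' \<and> anch a b R' \<and> refines R' (S n)"
      using step_part[OF X Y _ _, of "S n" a b "1 / real (Suc n)"] Suc by simp
    then have "goodS X Y (S (Suc n)) \<and> smallR (1 / real (Suc n)) (S (Suc n)) \<and> anch a b (S (Suc n)) \<and> refines (S (Suc n)) (S n)"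
      unfolding SS by (rule someI_ex)
    then show ?case by blast
  qed
  have props: "smallR (1 / real (Suc n)) (S (Suc n)) \<and> refines (S (Suc n)) (S n)" for n
  proof -
    have "\<exists>R'. goodS X Y R' \<and> smallR (1 / real (Suc n)) R' \<and> anch a b R' \<and> refines R' (S n)"
      using step_part[OF X Y _ _, of "S n" a b "1 / real (Suc n)"] inv[of n] by simp
    then have "goodS X Y (S (Suc n)) \<and> smallR (1 / real (Suc n)) (S (Suc n)) \<and> anch a b (S (Suc n)) \<and> refines (S (Suc n)) (S n)"
      unfolding SS by (rule someI_ex)
    then show ?thesis by blast
  qed
  have g: "\<And>n. goodS X Y (S n)" using inv by blast
  have sm: "\<And>n. smallR (1 / real (Suc n)) (S (Suc n))" using props by blast
  have rf: "\<And>n. refines (S (Suc n)) (S n)" using props by blast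
  define S' where "S' n = prod.swap ` S n" for n
  have g': "\<And>n. goodS Y X (S' n)" unfolding S'_def using g goodS_swap by blast
  have sm': "\<And>n. smallR (1 / real (Suc n)) (S' (Suc n))" unfolding S'_def using sm smallR_swap by blast
  have rf': "\<And>n. refines (S' (Suc n)) (S' n)" unfolding S'_def using rf refines_swap by blast
  have cX: "compact X" and cY: "compact Y" using X Y unfolding cantorlike_def by auto
  obtain \<phi> where phi: "\<forall>x\<in>X. \<phi> x \<in> Y \<and> (\<forall>n. \<forall>p\<in>S n. x \<in> fst p \<longrightarrow> \<phi> x \<in> snd p)" "continuous_on X \<phi>"
    using G_fst[OF cY g sm rf] by blast
  obtain \<psi> where psi0: "\<forall>y\<in>Y. \<psi> y \<in> X \<and> (\<forall>n. \<forall>p\<in>S' n. y \<in> fst p \<longrightarrow> \<psi> y \<in> snd p)" "continuous_on Y \<psi>"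
    using G_fst[OF cX g' sm' rf'] by blast
  have psi: "\<forall>y\<in>Y. \<psi> y \<in> X \<and> (\<forall>n. \<forall>p\<in>S n. y \<in> snd p \<longrightarrow> \<psi> y \<in> fst p)"
  proof (intro ballI conjI allI impI)
    fix y assume y: "y \<in> Y"
    then show "\<psi> y \<in> X" using psi0 by blast
    fix n p assume "p \<in> S n" "y \<in> snd p"
    then have "prod.swap p \<in> S' n" "y \<in> fst (prod.swap p)" unfolding S'_def by auto
    then have "\<psi> y \<in> snd (prod.swap p)" using psi0 y by blast
    then show "\<psi> y \<in> fst p" by simp
  qed
  have "homeomorphism X Y \<phi> \<psi>"
  proof (rule homeomorphismI)
    show "continuous_on X \<phi>" "continuous_on Y \<psi>" using phi psi0 by auto
    show "\<phi> ` X \<subseteq> Y" "\<psi> ` Y \<subseteq> X" using phi psi by auto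
    fix x assume x: "x \<in> X"
    have "\<forall>n. \<forall>p\<in>S n. x \<in> fst p \<longrightarrow> \<psi> (\<phi> x) \<in> fst p"
      using phi x psi by blast
    then show "\<psi> (\<phi> x) = x" using U_fst[OF g sm x] by blast
  next
    fix y assume y: "y \<in> Y"
    have "\<forall>n. \<forall>p\<in>S' n. y \<in> fst p \<longrightarrow> \<phi> (\<psi> y) \<in> fst p"
    proof (intro allI ballI impI)
      fix n p assume "p \<in> S' n" "y \<in> fst p"
      then have "prod.swap p \<in> S n" "y \<in> snd (prod.swap p)" unfolding S'_def by auto
      then have "\<psi> y \<in> fst (prod.swap p)" using psi y by blast
      then have "\<phi> (\<psi> y) \<in> snd (prod.swap p)" using phi psi y \<open>prod.swap p \<in> S n\<close> by blast
      then show "\<phi> (\<psi> y) \<in> fst p" by simp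
    qed
    then show "\<phi> (\<psi> y) = y" using U_fst[OF g' sm' y] by blast
  qed
  moreover have "\<phi> a = b"
  proof -
    have "\<forall>n. \<forall>p\<in>S' n. b \<in> fst p \<longrightarrow> \<phi> a \<in> fst p"
    proof (intro allI ballI impI)
      fix n p assume "p \<in> S' n" "b \<in> fst p"
      then have p: "prod.swap p \<in> S n" "b \<in> snd (prod.swap p)" unfolding S'_def by auto
      obtain p0 where p0: "p0 \<in> S n" "a \<in> fst p0" "b \<in> snd p0" using inv[of n] unfolding anch_def by blast
      have "prod.swap p = p0" using goodS_unique_snd[OF g p(1) p0(1) p(2) p0(3)] .
      then have "\<phi> a \<in> snd (prod.swap p)" using phi a p0 by blast
      then show "\<phi> a \<in> fst p" by simp
    qed
    then show ?thesis using U_fst[OF g' sm' b] by blast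
  qed
  ultimately show ?thesis by blast
qed

definition walk :: "('v \<Rightarrow> 'v \<Rightarrow> bool) \<Rightarrow> (nat \<Rightarrow> 'v) \<Rightarrow> nat \<Rightarrow> bool" where
  "walk E v L \<longleftrightarrow> (\<forall>k<L. E (v k) (v (Suc k)))"

definition wsum :: "('v \<Rightarrow> 'v \<Rightarrow> real) \<Rightarrow> (nat \<Rightarrow> 'v) \<Rightarrow> nat \<Rightarrow> real" where
  "wsum u v L = (\<Sum>k<L. u (v k) (v (Suc k)))"

lemma pigeon:
  assumes "finite V" "\<forall>k<L. v k \<in> V" "card V < L"
  shows "\<exists>a b. a < b \<and> b < L \<and> v a = v b"
proof (rule ccontr)
  assume na: "\<not> ?thesis"
  have "inj_on v {..<L}"
  proof (rule inj_onI)
    fix a b assume ab: "a \<in> {..<L}" "b \<in> {..<L}" "v a = v b"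
    show "a = b"
    proof (rule ccontr)
      assume "a \<noteq> b"
      then consider "a < b" | "b < a" by linarith
      then show False
      proof cases
        case 1 then show False using na ab by auto
      next
        case 2
        have "\<exists>a' b'. a' < b' \<and> b' < L \<and> v a' = v b'"
          using ab 2 by (intro exI[of _ b] exI[of _ a]) simp
        then show False using na by blast
      qed
    qed
  qed
  then have "card (v ` {..<L}) = L" by (simp add: card_image)
  moreover have "v ` {..<L} \<subseteq> V" using assms(2) by auto
  ultimately have "L \<le> card V" using card_mono[OF assms(1)] by metis
  then show False using assms(3) by simp
qed

lemma split_walk:
  assumes w: "walk E v L" and ab: "a < b" "b \<le> L" and eq: "v a = v b"
  shows "walk E (\<lambda>k. v (a + k)) (b - a)"
    and "walk E (\<lambda>k. if k \<le> a then v k else v (k + (b - a))) (L - (b - a))"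
    and "(\<lambda>k. if k \<le> a then v k else v (k + (b - a))) (L - (b - a)) = v L"
    and "wsum u v L = wsum u (\<lambda>k. v (a + k)) (b - a) + wsum u (\<lambda>k. if k \<le> a then v k else v (k + (b - a))) (L - (b - a))"
proof -
  define rs where "rs = (\<lambda>k. if k \<le> a then v k else v (k + (b - a)))"
  have rs_hi: "k \<ge> a \<Longrightarrow> rs k = v (k + (b - a))" for k
    unfolding rs_def using eq ab by auto
  have rs_lo: "k \<le> a \<Longrightarrow> rs k = v k" for k unfolding rs_def by simp
  show "walk E (\<lambda>k. v (a + k)) (b - a)"
    unfolding walk_def using w ab unfolding walk_def by simp
  show "walk E rs (L - (b - a))"
    unfolding walk_def
  proof (intro allI impI)
    fix k assume k: "k < L - (b - a)"
    show "E (rs k) (rs (Suc k))"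
    proof (cases "k < a")
      case True
      then show ?thesis using rs_lo[of k] rs_lo[of "Suc k"] w ab unfolding walk_def by simp
    next
      case False
      then have "rs k = v (k + (b - a))" "rs (Suc k) = v (Suc (k + (b - a)))" using rs_hi[of k] rs_hi[of "Suc k"] by auto
      moreover have "k + (b - a) < L" using k ab by linarith
      ultimately show ?thesis using w unfolding walk_def by simp
    qed
  qed
  show "rs (L - (b - a)) = v L"
  proof (cases "L - (b - a) \<le> a")
    case True
    then have "b = L" using ab by linarith
    then show ?thesis using rs_lo[OF True] eq ab by simp
  next
    case False
    then show ?thesis using rs_hi[of "L - (b - a)"] ab by simp
  qed
  define f where "f k = u (v k) (v (Suc k))" for k
  have s1: "wsum u (\<lambda>k. v (a + k)) (b - a) = sum f {a..<b}"
  proof -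
    have "wsum u (\<lambda>k. v (a + k)) (b - a) = (\<Sum>k\<in>{0..<b - a}. f (k + a))"
      unfolding wsum_def f_def atLeast0LessThan by (simp add: add.commute)
    also have "\<dots> = sum f {0 + a..<(b - a) + a}" by (rule sum.shift_bounds_nat_ivl[symmetric])
    also have "\<dots> = sum f {a..<b}" using ab by simp
    finally show ?thesis .
  qed
  have s2: "wsum u rs (L - (b - a)) = sum f {0..<a} + sum f {b..<L}"
  proof -
    have "wsum u rs (L - (b - a)) = sum (\<lambda>k. u (rs k) (rs (Suc k))) {0..<a} + sum (\<lambda>k. u (rs k) (rs (Suc k))) {a..<L - (b - a)}"
      unfolding wsum_def atLeast0LessThan[symmetric] using ab
      by (simp add: sum.atLeastLessThan_concat)
    also have "sum (\<lambda>k. u (rs k) (rs (Suc k))) {0..<a} = sum f {0..<a}"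
      by (rule sum.cong) (auto simp: rs_lo f_def)
    also have "sum (\<lambda>k. u (rs k) (rs (Suc k))) {a..<L - (b - a)} = sum (\<lambda>k. f (k + (b - a))) {a..<L - (b - a)}"
      by (rule sum.cong) (auto simp: rs_hi f_def)
    also have "\<dots> = sum f {a + (b - a)..<(L - (b - a)) + (b - a)}" by (rule sum.shift_bounds_nat_ivl[symmetric])
    also have "\<dots> = sum f {b..<L}" using ab by simp
    finally show ?thesis .
  qed
  have "wsum u v L = sum f {0..<a} + sum f {a..<b} + sum f {b..<L}"
    unfolding wsum_def f_def atLeast0LessThan[symmetric] using ab
    by (simp add: sum.atLeastLessThan_concat)
  then show "wsum u v L = wsum u (\<lambda>k. v (a + k)) (b - a) + wsum u rs (L - (b - a))"
    using s1 s2 by simp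
qed

lemma walk_V:
  assumes EV: "\<forall>i j. E i j \<longrightarrow> i \<in> V \<and> j \<in> V" and w: "walk E v L" and L: "1 \<le> L" and k: "k \<le> L"
  shows "v k \<in> V"
proof (cases "k < L")
  case True
  then show ?thesis using w EV unfolding walk_def by blast
next
  case False
  then have "k = Suc (L - 1)" using k L by simp
  moreover have "L - 1 < L" using L by simp
  then have "E (v (L - 1)) (v (Suc (L - 1)))" using w unfolding walk_def by blast
  ultimately show ?thesis using EV by metis
qed

lemma wsum_cong:
  assumes "\<And>k. k \<le> L \<Longrightarrow> f k = g k"
  shows "wsum u f L = wsum u g L"
  unfolding wsum_def by (rule sum.cong) (auto simp: assms)

lemma walk_cong:
  assumes "\<And>k. k \<le> L \<Longrightarrow> f k = g k" "walk E g L"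
  shows "walk E f L"
  using assms unfolding walk_def by simp

lemma reduce_closed:
  assumes fin: "finite V" and EV: "\<forall>i j. E i j \<longrightarrow> i \<in> V \<and> j \<in> V"
    and hyp: "\<forall>v L. walk E v L \<and> v L = v 0 \<and> 1 \<le> L \<and> L \<le> card V \<longrightarrow> wsum u v L \<le> 0"
  shows "walk E v L \<Longrightarrow> v L = v 0 \<Longrightarrow> 1 \<le> L \<Longrightarrow> wsum u v L \<le> 0"
proof (induction L arbitrary: v rule: less_induct)
  case (less L)
  show ?case
  proof (cases "L \<le> card V")
    case True
    then show ?thesis using hyp less.prems by blast
  next
    case False
    have vV: "\<forall>k<L. v k \<in> V" using walk_V[OF EV less.prems(1) less.prems(3)] by simp
    have cL: "card V < L" using False by simp
    obtain a b where ab: "a < b" "b < L" "v a = v b" using pigeon[OF fin vV cL] by blast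
    note sp = split_walk[OF less.prems(1) ab(1) _ ab(3)]
    have s: "wsum u v L = wsum u (\<lambda>k. v (a + k)) (b - a) + wsum u (\<lambda>k. if k \<le> a then v k else v (k + (b - a))) (L - (b - a))"
      using sp(4)[where u=u] ab by simp
    have 1: "wsum u (\<lambda>k. v (a + k)) (b - a) \<le> 0"
      using less.IH[of "b - a" "\<lambda>k. v (a + k)"] sp(1) ab by simp
    have 2: "wsum u (\<lambda>k. if k \<le> a then v k else v (k + (b - a))) (L - (b - a)) \<le> 0"
      using less.IH[of "L - (b - a)" "\<lambda>k. if k \<le> a then v k else v (k + (b - a))"] sp(2,3) ab less.prems(2)
      by simp
    show ?thesis using s 1 2 by simp
  qed
qed

lemma reduce_path:
  assumes fin: "finite V" and EV: "\<forall>i j. E i j \<longrightarrow> i \<in> V \<and> j \<in> V"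
    and hyp: "\<forall>v L. walk E v L \<and> v L = v 0 \<and> 1 \<le> L \<longrightarrow> wsum u v L \<le> 0"
  shows "walk E v L \<Longrightarrow> wsum u v L \<le> real (card V) * (\<Sum>i\<in>V. \<Sum>j\<in>V. \<bar>u i j\<bar>)"
proof (induction L arbitrary: v rule: less_induct)
  case (less L)
  define Mb where "Mb = (\<Sum>i\<in>V. \<Sum>j\<in>V. \<bar>u i j\<bar>)"
  have Mb0: "Mb \<ge> 0" unfolding Mb_def by (simp add: sum_nonneg)
  have uM: "i \<in> V \<Longrightarrow> j \<in> V \<Longrightarrow> u i j \<le> Mb" for i j
  proof -
    assume ij: "i \<in> V" "j \<in> V"
    have "\<bar>u i j\<bar> \<le> (\<Sum>j\<in>V. \<bar>u i j\<bar>)" using member_le_sum[of j V "\<lambda>j. \<bar>u i j\<bar>"] ij fin by simp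
    also have "\<dots> \<le> Mb" unfolding Mb_def using member_le_sum[of i V "\<lambda>i. \<Sum>j\<in>V. \<bar>u i j\<bar>"] ij fin
      by (simp add: sum_nonneg)
    finally show ?thesis by simp
  qed
  show ?case
  proof (cases "L \<le> card V")
    case True
    have "wsum u v L \<le> (\<Sum>k<L. Mb)"
      unfolding wsum_def
    proof (rule sum_mono)
      fix k assume "k \<in> {..<L}"
      then have "E (v k) (v (Suc k))" using less.prems unfolding walk_def by simp
      then show "u (v k) (v (Suc k)) \<le> Mb" using uM EV by blast
    qed
    also have "\<dots> = real L * Mb" by simp
    also have "\<dots> \<le> real (card V) * Mb" using True Mb0 by (simp add: mult_right_mono)
    finally show ?thesis unfolding Mb_def .
  next
    case False
    then have L1: "1 \<le> L" by simp
    have vV: "\<forall>k<L. v k \<in> V" using walk_V[OF EV less.prems(1) L1] by simp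
    have cL: "card V < L" using False by simp
    obtain a b where ab: "a < b" "b < L" "v a = v b" using pigeon[OF fin vV cL] by blast
    note sp = split_walk[OF less.prems(1) ab(1) _ ab(3)]
    have s: "wsum u v L = wsum u (\<lambda>k. v (a + k)) (b - a) + wsum u (\<lambda>k. if k \<le> a then v k else v (k + (b - a))) (L - (b - a))"
      using sp(4)[where u=u] ab by simp
    have 1: "wsum u (\<lambda>k. v (a + k)) (b - a) \<le> 0"
      using hyp sp(1) ab by simp
    have 2: "wsum u (\<lambda>k. if k \<le> a then v k else v (k + (b - a))) (L - (b - a)) \<le> real (card V) * Mb"
      using less.IH[of "L - (b - a)" "\<lambda>k. if k \<le> a then v k else v (k + (b - a))"] sp(2) ab
      unfolding Mb_def by simp
    show ?thesis using s 1 2 unfolding Mb_def by simp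
  qed
qed

lemma wsum_minus: "wsum (\<lambda>i j. w i j - c) v L = wsum w v L - real L * c"
  unfolding wsum_def by (simp add: sum_subtractf)

lemma normalize_walk:
  assumes EV: "\<forall>i j. E i j \<longrightarrow> i \<in> V \<and> j \<in> V" and w: "walk E v L" and L: "1 \<le> L" "L \<le> N"
  shows "\<exists>f\<in>PiE {..N} (\<lambda>_. V). walk E f L \<and> (\<forall>k\<le>L. f k = v k)"
proof -
  define f where "f = restrict (\<lambda>k. if k \<le> L then v k else v 0) {..N}"
  have "f \<in> PiE {..N} (\<lambda>_. V)"
    unfolding f_def using walk_V[OF EV w L(1)] L by auto
  moreover have fk: "\<forall>k\<le>L. f k = v k" unfolding f_def using L by auto
  moreover have "walk E f L" using walk_cong[of L f v E] fk w by simp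
  ultimately show ?thesis by blast
qed

lemma graph_opt:
  fixes V :: "'v set" and E :: "'v \<Rightarrow> 'v \<Rightarrow> bool" and w :: "'v \<Rightarrow> 'v \<Rightarrow> real"
  assumes fin: "finite V" and ne: "V \<noteq> {}" and out: "\<forall>i\<in>V. \<exists>j. E i j"
    and EV: "\<forall>i j. E i j \<longrightarrow> i \<in> V \<and> j \<in> V"
  shows "\<exists>c h p cyc. 1 \<le> p \<and> inj_on cyc {..<p} \<and> (\<forall>k<p. E (cyc k) (cyc (Suc k mod p))) \<and>
     (\<Sum>k<p. w (cyc k) (cyc (Suc k mod p))) = real p * c \<and> (\<forall>i j. E i j \<longrightarrow> w i j \<le> c + h i - h j)"
proof -
  define N where "N = card V"
  define CW where "CW = {(f, L). f \<in> PiE {..N} (\<lambda>_. V) \<and> 1 \<le> L \<and> L \<le> N \<and> walk E f L \<and> f L = f 0}"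
  define m where "m = (\<lambda>(f, L). wsum w f L / real L)"
  have finCW: "finite CW"
  proof -
    have "CW \<subseteq> PiE {..N} (\<lambda>_. V) \<times> {1..N}" unfolding CW_def by auto
    moreover have "finite (PiE {..N} (\<lambda>_. V) \<times> {1..N})" using fin by (simp add: finite_PiE)
    ultimately show ?thesis by (rule finite_subset)
  qed
  have "CW \<noteq> {}"
  proof -
    obtain i0 where i0: "i0 \<in> V" using ne by blast
    define succ where "succ i = (SOME j. E i j)" for i
    have succ: "i \<in> V \<Longrightarrow> E i (succ i)" for i unfolding succ_def using out someI_ex by metis
    define v where "v k = (succ ^^ k) i0" for k
    have vV: "v k \<in> V" for k
    proof (induction k)
      case 0 then show ?case using i0 unfolding v_def by simp
    next
      case (Suc k)
      have "E (v k) (succ (v k))" using succ Suc.IH by blast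
      then have "succ (v k) \<in> V" using EV by blast
      then show ?case unfolding v_def by simp
    qed
    have wv: "walk E v L" for L unfolding walk_def v_def using succ vV[unfolded v_def] by simp
    have "\<forall>k<Suc N. v k \<in> V" using vV by blast
    then obtain a b where ab: "a < b" "b < Suc N" "v a = v b" using pigeon[OF fin] unfolding N_def by blast
    note sp = split_walk[OF wv[of b] ab(1) _ ab(3)]
    have lw: "walk E (\<lambda>k. v (a + k)) (b - a)" using sp(1) by simp
    have ba: "1 \<le> b - a" "b - a \<le> N" using ab by auto
    then obtain f where f: "f \<in> PiE {..N} (\<lambda>_. V)" "walk E f (b - a)" "\<forall>k\<le>b - a. f k = v (a + k)"
      using normalize_walk[OF EV lw, of N] by blast
    have "(f, b - a) \<in> CW" unfolding CW_def using f ab ba by simp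
    then show ?thesis by blast
  qed
  define c where "c = Max (m ` CW)"
  define u where "u i j = w i j - c" for i j
  have c1: "wsum u v L \<le> 0" if H: "walk E v L" "v L = v 0" "1 \<le> L" "L \<le> N" for v L
  proof -
    obtain f where f: "f \<in> PiE {..N} (\<lambda>_. V)" "walk E f L" "\<forall>k\<le>L. f k = v k"
      using normalize_walk[OF EV H(1) H(3,4)] by blast
    have "(f, L) \<in> CW" unfolding CW_def using f H by simp
    then have "m (f, L) \<le> c" unfolding c_def using finCW by simp
    then have "wsum w f L / real L \<le> c" unfolding m_def by simp
    moreover have "wsum w f L = wsum w v L" using f(3) by (intro wsum_cong) simp
    ultimately have "wsum w v L \<le> real L * c" using H(3) by (simp add: divide_le_eq mult.commute)
    then show ?thesis unfolding u_def wsum_minus by simp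
  qed
  have c2: "\<forall>v L. walk E v L \<and> v L = v 0 \<and> 1 \<le> L \<longrightarrow> wsum u v L \<le> 0"
    using reduce_closed[OF fin EV, of u] c1 unfolding N_def by blast
  have "c \<in> m ` CW" unfolding c_def using finCW \<open>CW \<noteq> {}\<close> by simp
  then obtain f0 L0 where f0: "(f0, L0) \<in> CW" "m (f0, L0) = c" by auto
  define Pr where "Pr L = (\<exists>f. (f, L) \<in> CW \<and> wsum w f L = real L * c)" for L
  have "Pr L0" unfolding Pr_def
  proof (intro exI conjI)
    show "(f0, L0) \<in> CW" by (rule f0(1))
    have "L0 \<ge> 1" using f0(1) unfolding CW_def by simp
    then show "wsum w f0 L0 = real L0 * c" using f0(2) unfolding m_def by (simp add: field_simps)
  qed
  define p where "p = (LEAST L. Pr L)"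
  have "Pr p" unfolding p_def using \<open>Pr L0\<close> by (rule LeastI)
  then obtain cyc where cyc: "(cyc, p) \<in> CW" "wsum w cyc p = real p * c" unfolding Pr_def by blast
  have cycp: "1 \<le> p" "p \<le> N" "walk E cyc p" "cyc p = cyc 0" using cyc(1) unfolding CW_def by auto
  have minp: "L < p \<Longrightarrow> \<not> Pr L" for L unfolding p_def by (rule not_less_Least)
  have u0: "wsum u cyc p = 0" using cyc(2) unfolding u_def wsum_minus by simp
  have inj: "inj_on cyc {..<p}"
  proof (rule ccontr)
    assume "\<not> inj_on cyc {..<p}"
    then obtain a b where ab0: "a < p" "b < p" "a \<noteq> b" "cyc a = cyc b" unfolding inj_on_def by blast
    then obtain a b where ab: "a < b" "b < p" "cyc a = cyc b"
      by (metis linorder_neqE_nat)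
    note sp = split_walk[OF cycp(3) ab(1) _ ab(3)]
    have s: "wsum u cyc p = wsum u (\<lambda>k. cyc (a + k)) (b - a) + wsum u (\<lambda>k. if k \<le> a then cyc k else cyc (k + (b - a))) (p - (b - a))"
      using sp(4)[where u=u] ab by simp
    have 1: "wsum u (\<lambda>k. cyc (a + k)) (b - a) \<le> 0" using c2 sp(1) ab by simp
    have 2: "wsum u (\<lambda>k. if k \<le> a then cyc k else cyc (k + (b - a))) (p - (b - a)) \<le> 0"
      using c2 sp(2,3) ab cycp(4) by simp
    have "wsum u (\<lambda>k. cyc (a + k)) (b - a) = 0" using s 1 2 u0 by simp
    then have e: "wsum w (\<lambda>k. cyc (a + k)) (b - a) = real (b - a) * c" unfolding u_def wsum_minus by simp
    have lw: "walk E (\<lambda>k. cyc (a + k)) (b - a)" using sp(1) ab by simp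
    obtain f where f: "f \<in> PiE {..N} (\<lambda>_. V)" "walk E f (b - a)" "\<forall>k\<le>b - a. f k = cyc (a + k)"
    proof -
      have "1 \<le> b - a" "b - a \<le> N" using ab cycp(2) by auto
      then show ?thesis using normalize_walk[OF EV lw, of N] that by blast
    qed
    have ba: "1 \<le> b - a" "b - a \<le> N" using ab cycp(2) by auto
    have "(f, b - a) \<in> CW" unfolding CW_def using f ab cycp ba by simp
    moreover have "wsum w f (b - a) = real (b - a) * c" using e f(3) wsum_cong[of "b - a" f "\<lambda>k. cyc (a + k)" w] by simp
    ultimately have "Pr (b - a)" unfolding Pr_def by blast
    moreover have "b - a < p" using ab by simp
    ultimately show False using minp by blast
  qed
  have modeq: "k < p \<Longrightarrow> cyc (Suc k mod p) = cyc (Suc k)" for k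
  proof -
    assume k: "k < p"
    show ?thesis
    proof (cases "Suc k < p")
      case True then show ?thesis by simp
    next
      case False then have "Suc k = p" using k by simp
      then show ?thesis using cycp(4) by simp
    qed
  qed
  have edges: "\<forall>k<p. E (cyc k) (cyc (Suc k mod p))"
    using modeq cycp(3) unfolding walk_def by simp
  have sumeq: "(\<Sum>k<p. w (cyc k) (cyc (Suc k mod p))) = real p * c"
  proof -
    have "(\<Sum>k<p. w (cyc k) (cyc (Suc k mod p))) = wsum w cyc p"
      unfolding wsum_def by (rule sum.cong) (auto simp: modeq)
    then show ?thesis using cyc(2) by simp
  qed
  define Bd where "Bd = real (card V) * (\<Sum>i\<in>V. \<Sum>j\<in>V. \<bar>u i j\<bar>)"
  have bd: "walk E v L \<Longrightarrow> wsum u v L \<le> Bd" for v L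
    unfolding Bd_def using reduce_path[OF fin EV c2] by blast
  define Ws where "Ws i = {wsum u v L | v L. walk E v L \<and> v 0 = i}" for i
  define h where "h i = Sup (Ws i)" for i
  have Wsne: "Ws i \<noteq> {}" for i
  proof -
    have "walk E (\<lambda>_. i) 0" unfolding walk_def by simp
    then show ?thesis unfolding Ws_def by blast
  qed
  have Wsbdd: "bdd_above (Ws i)" for i
    unfolding Ws_def bdd_above_def using bd by blast
  have pot: "u i j + h j \<le> h i" if e: "E i j" for i j
  proof -
    have "z \<le> h i - u i j" if z: "z \<in> Ws j" for z
    proof -
      obtain v L where vL: "z = wsum u v L" "walk E v L" "v 0 = j" using z unfolding Ws_def by blast
      define v' where "v' k = (case k of 0 \<Rightarrow> i | Suc k' \<Rightarrow> v k')" for k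
      have "walk E v' (Suc L)"
        unfolding walk_def
      proof (intro allI impI)
        fix k assume "k < Suc L"
        then show "E (v' k) (v' (Suc k))"
          using e vL(2,3) unfolding v'_def walk_def by (cases k) auto
      qed
      moreover have "v' 0 = i" unfolding v'_def by simp
      ultimately have "wsum u v' (Suc L) \<in> Ws i" unfolding Ws_def by blast
      then have "wsum u v' (Suc L) \<le> h i" unfolding h_def using Wsbdd by (rule cSup_upper)
      moreover have "wsum u v' (Suc L) = u i j + z"
        unfolding wsum_def sum.lessThan_Suc_shift using vL unfolding v'_def wsum_def by simp
      ultimately show ?thesis by simp
    qed
    then have "h j \<le> h i - u i j" unfolding h_def using Wsne by (intro cSup_least) auto
    then show ?thesis by simp
  qed
  have "\<forall>i j. E i j \<longrightarrow> w i j \<le> c + h i - h j" using pot unfolding u_def by fastforce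
  then show ?thesis using cycp(1) inj edges sumeq by blast
qed

lemma meas_cont:
  fixes K :: "'a::metric_space set" and T :: "'a \<Rightarrow> 'a"
  assumes "continuous_on K T" "T ` K \<subseteq> K"
  shows "T \<in> measurable (restrict_space borel K) (restrict_space borel K)"
proof (rule measurable_restrict_space2)
  show "T \<in> space (restrict_space borel K) \<rightarrow> K" using assms(2) by (auto simp: space_restrict_space)
  show "T \<in> borel_measurable (restrict_space borel K)"
    by (rule borel_measurable_continuous_on_restrict[OF assms(1)])
qed

lemma cont_bounded:
  fixes K :: "'a::metric_space set" and f :: "'a \<Rightarrow> real"
  assumes "compact K" "continuous_on K f"
  shows "\<exists>B. \<forall>x\<in>K. \<bar>f x\<bar> \<le> B"
proof -
  have "compact (f ` K)" using compact_continuous_image assms by blast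
  then have "bounded (f ` K)" by (rule compact_imp_bounded)
  then obtain B where "\<forall>y\<in>f ` K. norm y \<le> B" unfolding bounded_iff by blast
  then show ?thesis by auto
qed

lemma integrable_cont:
  fixes K :: "'a::metric_space set" and f :: "'a \<Rightarrow> real"
  assumes cK: "compact K" and cf: "continuous_on K f" and N: "prob_space N" and sN: "sets N = sets (restrict_space borel K)"
  shows "integrable N f"
proof -
  interpret prob_space N by (rule N)
  have sp: "space N = K" using sets_eq_imp_space_eq[OF sN] by (simp add: space_restrict_space)
  obtain B where B: "\<forall>x\<in>K. \<bar>f x\<bar> \<le> B" using cont_bounded[OF cK cf] by blast
  have "f \<in> borel_measurable (restrict_space borel K)" by (rule borel_measurable_continuous_on_restrict[OF cf])
  then have m: "f \<in> borel_measurable N" using measurable_cong_sets[OF sN refl] by blast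
  show ?thesis
    by (rule integrable_const_bound[where B=B]) (use B sp m in auto)
qed

lemma integral_le_subaction:
  fixes K :: "'a::metric_space set" and T :: "'a \<Rightarrow> 'a" and f g :: "'a \<Rightarrow> real"
  assumes cK: "compact K" and cT: "continuous_on K T" and TK: "T ` K \<subseteq> K"
    and cf: "continuous_on K f" and cg: "continuous_on K g"
    and ineq: "\<forall>x\<in>K. f x \<le> c + g (T x) - g x"
    and N: "N \<in> invariant_measures K T"
  shows "integral\<^sup>L N f \<le> c"
proof -
  have pN: "prob_space N" and sN: "sets N = sets (restrict_space borel K)"
    and inv: "\<forall>A\<in>sets N. emeasure N (T -` A \<inter> K) = emeasure N A"
    using N unfolding invariant_measures_def by auto
  interpret prob_space N by (rule pN)
  let ?M = "restrict_space borel K"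
  have sp: "space N = K" using sets_eq_imp_space_eq[OF sN] by (simp add: space_restrict_space)
  have mT: "T \<in> measurable N ?M"
    using meas_cont[OF cT TK] measurable_cong_sets[OF sN refl] by blast
  have dN: "distr N ?M T = N"
  proof (rule measure_eqI)
    show "sets (distr N ?M T) = sets N" using sN by simp
    fix A assume "A \<in> sets (distr N ?M T)"
    then have A: "A \<in> sets ?M" by simp
    then have "emeasure (distr N ?M T) A = emeasure N (T -` A \<inter> space N)" by (rule emeasure_distr[OF mT])
    also have "\<dots> = emeasure N A" using inv A sN sp by simp
    finally show "emeasure (distr N ?M T) A = emeasure N A" .
  qed
  have mg: "g \<in> borel_measurable ?M" by (rule borel_measurable_continuous_on_restrict[OF cg])
  have "integral\<^sup>L N (\<lambda>x. g (T x)) = integral\<^sup>L (distr N ?M T) g"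
    by (rule integral_distr[OF mT mg, symmetric])
  also have "\<dots> = integral\<^sup>L N g" using dN by simp
  finally have gT: "integral\<^sup>L N (\<lambda>x. g (T x)) = integral\<^sup>L N g" .
  have ig: "integrable N g" by (rule integrable_cont[OF cK cg pN sN])
  have if': "integrable N f" by (rule integrable_cont[OF cK cf pN sN])
  have cgT: "continuous_on K (\<lambda>x. g (T x))"
    using continuous_on_compose2[OF cg cT TK] .
  have igT: "integrable N (\<lambda>x. g (T x))" by (rule integrable_cont[OF cK cgT pN sN])
  have ic: "integrable N (\<lambda>x. c)" by simp
  have "integral\<^sup>L N f \<le> integral\<^sup>L N (\<lambda>x. c + g (T x) - g x)"
    by (rule integral_mono[OF if']) (use ic igT ig ineq sp in auto)
  also have "\<dots> = integral\<^sup>L N (\<lambda>x. c + g (T x)) - integral\<^sup>L N g"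
    using ic igT ig by (simp add: integral_diff)
  also have "\<dots> = c + integral\<^sup>L N (\<lambda>x. g (T x)) - integral\<^sup>L N g"
    using ic igT by (simp add: prob_space)
  also have "\<dots> = c" using gT by simp
  finally show ?thesis .
qed

lemma suc_mod_bij:
  assumes p: "1 \<le> (p::nat)"
  shows "inj_on (\<lambda>k. Suc k mod p) {..<p}" and "(\<lambda>k. Suc k mod p) ` {..<p} = {..<p}"
proof -
  have e: "k < p \<Longrightarrow> Suc k mod p = (if Suc k = p then 0 else Suc k)" for k by auto
  show "inj_on (\<lambda>k. Suc k mod p) {..<p}"
  proof (rule inj_onI)
    fix a b assume "a \<in> {..<p}" "b \<in> {..<p}" "Suc a mod p = Suc b mod p"
    then show "a = b" using e[of a] e[of b] by (auto split: if_splits)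
  qed
  show "(\<lambda>k. Suc k mod p) ` {..<p} = {..<p}"
  proof
    show "(\<lambda>k. Suc k mod p) ` {..<p} \<subseteq> {..<p}" using p by auto
    show "{..<p} \<subseteq> (\<lambda>k. Suc k mod p) ` {..<p}"
    proof
      fix j assume j: "j \<in> {..<p}"
      show "j \<in> (\<lambda>k. Suc k mod p) ` {..<p}"
      proof (cases j)
        case 0
        then have "Suc (p - 1) mod p = j" using p by simp
        moreover have "p - 1 \<in> {..<p}" using p by simp
        ultimately show ?thesis by (metis imageI)
      next
        case (Suc j')
        then have "Suc j' mod p = j" using j by simp
        moreover have "j' \<in> {..<p}" using j Suc by simp
        ultimately show ?thesis by (metis imageI)
      qed
    qed
  qed
qed

lemma orbit_measure:
  fixes K :: "'a::metric_space set" and T :: "'a \<Rightarrow> 'a" and x :: "nat \<Rightarrow> 'a" and f :: "'a \<Rightarrow> real"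
  assumes p: "1 \<le> p" and xK: "\<forall>k<p. x k \<in> K" and inj: "inj_on x {..<p}"
    and Tx: "\<forall>k<p. T (x k) = x (Suc k mod p)" and cT: "continuous_on K T" and TK: "T ` K \<subseteq> K"
    and cf: "continuous_on K f" and cK: "compact K"
  shows "distr (uniform_count_measure {..<p}) (restrict_space borel K) x \<in> invariant_measures K T"
    and "integral\<^sup>L (distr (uniform_count_measure {..<p}) (restrict_space borel K) x) f = (\<Sum>k<p. f (x k)) / real p"
    and "emeasure (distr (uniform_count_measure {..<p}) (restrict_space borel K) x) (x ` {..<p}) = 1"
proof -
  let ?U = "uniform_count_measure {..<p}"
  let ?M = "restrict_space borel K"
  let ?D = "distr ?U ?M x"
  have spM: "space ?M = K" by (simp add: space_restrict_space)
  have mx: "x \<in> measurable ?U ?M"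
  proof -
    have "x \<in> measurable (count_space {..<p}) ?M" using xK spM by auto
    then show ?thesis using measurable_cong_sets[OF sets_uniform_count_measure_count_space refl] by blast
  qed
  have ne: "{..<p} \<noteq> {}" using p by (simp add: lessThan_empty_iff)
  have pU: "prob_space ?U" using ne by (intro prob_space_uniform_count_measure) auto
  have pD: "prob_space ?D" by (rule prob_space.prob_space_distr[OF pU mx])
  have emD: "B \<in> sets ?M \<Longrightarrow> emeasure ?D B = card (x -` B \<inter> {..<p}) / card {..<p}" for B
  proof -
    assume B: "B \<in> sets ?M"
    have "emeasure ?D B = emeasure ?U (x -` B \<inter> space ?U)" by (rule emeasure_distr[OF mx B])
    also have "\<dots> = card (x -` B \<inter> {..<p}) / card {..<p}"
      by (simp add: space_uniform_count_measure emeasure_uniform_count_measure)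
    finally show ?thesis .
  qed
  show "?D \<in> invariant_measures K T"
    unfolding invariant_measures_def
  proof (intro CollectI conjI ballI)
    show "prob_space ?D" by (rule pD)
    show "sets ?D = sets ?M" by simp
    fix A assume "A \<in> sets ?D"
    then have A: "A \<in> sets ?M" by simp
    have pre: "T -` A \<inter> K \<in> sets ?M"
      using measurable_sets[OF meas_cont[OF cT TK] A] spM by simp
    have "x -` (T -` A \<inter> K) \<inter> {..<p} = {k\<in>{..<p}. x (Suc k mod p) \<in> A}"
      using xK Tx by auto
    moreover have "card {k\<in>{..<p}. x (Suc k mod p) \<in> A} = card (x -` A \<inter> {..<p})"
    proof -
      have i: "inj_on (\<lambda>k. Suc k mod p) {k\<in>{..<p}. x (Suc k mod p) \<in> A}"
        using suc_mod_bij(1)[OF p] by (rule inj_on_subset) auto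
      have "(\<lambda>k. Suc k mod p) ` {k\<in>{..<p}. x (Suc k mod p) \<in> A} = x -` A \<inter> {..<p}"
      proof
        show "(\<lambda>k. Suc k mod p) ` {k \<in> {..<p}. x (Suc k mod p) \<in> A} \<subseteq> x -` A \<inter> {..<p}"
          using p by auto
        show "x -` A \<inter> {..<p} \<subseteq> (\<lambda>k. Suc k mod p) ` {k \<in> {..<p}. x (Suc k mod p) \<in> A}"
        proof
          fix j assume j: "j \<in> x -` A \<inter> {..<p}"
          then obtain k where k: "k \<in> {..<p}" "j = Suc k mod p" using suc_mod_bij(2)[OF p] by blast
          then show "j \<in> (\<lambda>k. Suc k mod p) ` {k \<in> {..<p}. x (Suc k mod p) \<in> A}" using j by blast
        qed
      qed
      then show ?thesis using card_image[OF i] by simp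
    qed
    ultimately show "emeasure ?D (T -` A \<inter> K) = emeasure ?D A"
      using emD[OF pre] emD[OF A] by simp
  next
  qed
  have mf: "f \<in> borel_measurable ?M" by (rule borel_measurable_continuous_on_restrict[OF cf])
  have "integral\<^sup>L ?D f = integral\<^sup>L ?U (\<lambda>k. f (x k))" by (rule integral_distr[OF mx mf])
  also have "\<dots> = (\<Sum>k<p. f (x k)) / real p" by (simp add: integral_uniform_count_measure)
  finally show "integral\<^sup>L ?D f = (\<Sum>k<p. f (x k)) / real p" .
  have fs: "x ` {..<p} \<in> sets ?M"
  proof -
    have "closed K" using cK by (rule compact_imp_closed)
    then have "K \<inter> space borel \<in> sets borel" by simp
    moreover have "x ` {..<p} \<subseteq> K" using xK by auto
    moreover have "closed (x ` {..<p})" by (rule finite_imp_closed) simp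
    ultimately show ?thesis by (simp add: sets_restrict_space_iff)
  qed
  have "x -` (x ` {..<p}) \<inter> {..<p} = {..<p}" by auto
  then show "emeasure ?D (x ` {..<p}) = 1"
    using emD[OF fs] p by (simp add: ennreal_of_nat_eq_real_of_nat)
qed

lemma main_construct:
  fixes K :: "'a::metric_space set" and T :: "'a \<Rightarrow> 'a" and f :: "'a \<Rightarrow> real" and \<epsilon> :: real
  assumes cl: "cantorlike K" and cT: "continuous_on K T" and TK: "T ` K \<subseteq> K"
    and cf: "continuous_on K f" and e: "\<epsilon> > 0" and Kne: "K \<noteq> {}"
  shows "\<exists>\<sigma> \<sigma>'. homeomorphism K K \<sigma> \<sigma>' \<and> (\<forall>y\<in>K. dist y (\<sigma> y) < \<epsilon>) \<and>
           (\<exists>M. maximizing_measure K (\<sigma> \<circ> T) f M \<and> supported_on_periodic_orbit K (\<sigma> \<circ> T) M)"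
proof -
  have cK: "compact K" using cl unfolding cantorlike_def by blast
  have clK: "closed K" using cK by (rule compact_imp_closed)
  obtain P where P: "part K \<epsilon> P" using part_exists[OF cl e] by blast
  have Pf: "finite P" and Pc: "\<And>C. C \<in> P \<Longrightarrow> clo K C" and Pne: "\<And>C. C \<in> P \<Longrightarrow> C \<noteq> {}"
    and Ps: "\<And>C. C \<in> P \<Longrightarrow> small \<epsilon> C" and PU: "\<Union>P = K"
    and Pd: "\<And>C D. C \<in> P \<Longrightarrow> D \<in> P \<Longrightarrow> C \<noteq> D \<Longrightarrow> C \<inter> D = {}"
    using P unfolding part_def by auto
  have PK: "C \<in> P \<Longrightarrow> C \<subseteq> K" for C using Pc clo_subset by blast
  have Pcl: "C \<in> P \<Longrightarrow> closed C" for C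
    using Pc[of C] closedin_closed_trans[OF _ clK] unfolding clo_def by blast
  define pc where "pc y = (THE D. D \<in> P \<and> y \<in> D)" for y
  have pc: "y \<in> K \<Longrightarrow> pc y \<in> P \<and> y \<in> pc y" for y
  proof -
    assume y: "y \<in> K"
    then obtain D where D: "D \<in> P" "y \<in> D" using PU by blast
    have "\<exists>!D. D \<in> P \<and> y \<in> D" using D Pd by blast
    then show ?thesis unfolding pc_def by (rule theI')
  qed
  have pc_eq: "D \<in> P \<Longrightarrow> y \<in> D \<Longrightarrow> pc y = D" for D y
  proof -
    assume D: "D \<in> P" "y \<in> D"
    then have "y \<in> K" using PK by blast
    then have "pc y \<in> P" "y \<in> pc y" using pc by auto
    then show ?thesis using D Pd by blast
  qed
  define A where "A C D = C \<inter> (K \<inter> T -` D)" for C D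
  define E where "E C D = (C \<in> P \<and> D \<in> P \<and> A C D \<noteq> {})" for C D
  have cA: "C \<in> P \<Longrightarrow> D \<in> P \<Longrightarrow> compact (A C D)" for C D
  proof -
    assume CD: "C \<in> P" "D \<in> P"
    have "closedin (top_of_set K) (K \<inter> T -` D)" by (rule continuous_closedin_preimage[OF cT Pcl[OF CD(2)]])
    moreover have "closedin (top_of_set K) C" using Pc[OF CD(1)] unfolding clo_def by blast
    ultimately have "closedin (top_of_set K) (A C D)" unfolding A_def by (rule closedin_Int[rotated])
    then show ?thesis using closedin_compact[OF cK] by blast
  qed
  have AK: "A C D \<subseteq> K" for C D unfolding A_def by blast
  define mx where "mx C D = (SOME z. z \<in> A C D \<and> (\<forall>y\<in>A C D. f y \<le> f z))" for C D
  have mx: "E C D \<Longrightarrow> mx C D \<in> A C D \<and> (\<forall>y\<in>A C D. f y \<le> f (mx C D))" for C D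
  proof -
    assume "E C D"
    then have CD: "C \<in> P" "D \<in> P" "A C D \<noteq> {}" unfolding E_def by auto
    have "continuous_on (A C D) f" using continuous_on_subset[OF cf AK] .
    then have "\<exists>z\<in>A C D. \<forall>y\<in>A C D. f y \<le> f z" using continuous_attains_sup[OF cA[OF CD(1,2)] CD(3)] by blast
    then have "\<exists>z. z \<in> A C D \<and> (\<forall>y\<in>A C D. f y \<le> f z)" by blast
    then show ?thesis unfolding mx_def by (rule someI_ex)
  qed
  define wt where "wt C D = f (mx C D)" for C D
  have outE: "\<forall>C\<in>P. \<exists>D. E C D"
  proof
    fix C assume C: "C \<in> P"
    then obtain z where z: "z \<in> C" using Pne by blast
    then have "z \<in> K" using PK C by blast
    then have "T z \<in> K" using TK by blast
    then have "pc (T z) \<in> P" "T z \<in> pc (T z)" using pc by auto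
    then have "E C (pc (T z))" unfolding E_def A_def using C z \<open>z \<in> K\<close> by blast
    then show "\<exists>D. E C D" by blast
  qed
  have EV: "\<forall>C D. E C D \<longrightarrow> C \<in> P \<and> D \<in> P" unfolding E_def by blast
  have "P \<noteq> {}" using PU Kne by auto
  obtain c h p cyc where G: "1 \<le> p" "inj_on cyc {..<p}" "\<forall>k<p. E (cyc k) (cyc (Suc k mod p))"
     "(\<Sum>k<p. wt (cyc k) (cyc (Suc k mod p))) = real p * c" "\<forall>C D. E C D \<longrightarrow> wt C D \<le> c + h C - h D"
    using graph_opt[OF Pf \<open>P \<noteq> {}\<close> outE EV, of wt] by blast
  define nx where "nx k = Suc k mod p" for k
  have nxb: "inj_on nx {..<p}" "nx ` {..<p} = {..<p}" unfolding nx_def using suc_mod_bij[OF G(1)] by auto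
  have nxl: "k < p \<Longrightarrow> nx k < p" for k using nxb(2) by blast
  have cycP: "k < p \<Longrightarrow> cyc k \<in> P" for k using G(3) EV by blast
  define xs where "xs k = mx (cyc k) (cyc (nx k))" for k
  define ys where "ys k = T (xs k)" for k
  have xsA: "k < p \<Longrightarrow> xs k \<in> A (cyc k) (cyc (nx k))" for k
    unfolding xs_def nx_def using mx G(3) by blast
  have xsC: "k < p \<Longrightarrow> xs k \<in> cyc k" and xsK: "k < p \<Longrightarrow> xs k \<in> K" for k
    using xsA unfolding A_def by auto
  have ysC: "k < p \<Longrightarrow> ys k \<in> cyc (nx k)" for k using xsA unfolding A_def ys_def by auto
  have xsinj: "inj_on xs {..<p}"
  proof (rule inj_onI)
    fix a b assume ab: "a \<in> {..<p}" "b \<in> {..<p}" "xs a = xs b"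
    have "xs a \<in> cyc a" using xsC ab(1) by simp
    moreover have "xs a \<in> cyc b" using xsC[of b] ab by simp
    ultimately have "xs a \<in> cyc a \<inter> cyc b" by blast
    then have "cyc a = cyc b" using Pd cycP ab by blast
    then show "a = b" using G(2) ab unfolding inj_on_def by blast
  qed
  have tgt_unique: "k < p \<Longrightarrow> k' < p \<Longrightarrow> cyc (nx k) = cyc (nx k') \<Longrightarrow> k = k'" for k k'
  proof -
    assume kk: "k < p" "k' < p" "cyc (nx k) = cyc (nx k')"
    then have "nx k = nx k'" using G(2) nxl unfolding inj_on_def by blast
    then show "k = k'" using nxb(1) kk unfolding inj_on_def by blast
  qed
  have "\<forall>D\<in>P. \<exists>\<phi> \<psi>. homeomorphism D D \<phi> \<psi> \<and> (\<forall>k<p. cyc (nx k) = D \<longrightarrow> \<phi> (ys k) = xs (nx k))"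
  proof
    fix D assume D: "D \<in> P"
    show "\<exists>\<phi> \<psi>. homeomorphism D D \<phi> \<psi> \<and> (\<forall>k<p. cyc (nx k) = D \<longrightarrow> \<phi> (ys k) = xs (nx k))"
    proof (cases "\<exists>k<p. cyc (nx k) = D")
      case False
      have "homeomorphism D D (\<lambda>a. a) (\<lambda>a. a)" by (rule homeomorphism_ident)
      then show ?thesis using False by blast
    next
      case True
      then obtain k where k: "k < p" "cyc (nx k) = D" by blast
      have cD: "cantorlike D" using cantorlike_clo[OF cl Pc[OF D]] .
      have a: "ys k \<in> D" using ysC k by blast
      have b: "xs (nx k) \<in> D" using xsC nxl k by blast
      obtain \<phi> \<psi> where hp: "homeomorphism D D \<phi> \<psi>" "\<phi> (ys k) = xs (nx k)"
        using homog[OF cD cD a b] by blast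
      have "\<forall>k'<p. cyc (nx k') = D \<longrightarrow> \<phi> (ys k') = xs (nx k')"
        using tgt_unique k hp(2) by metis
      then show ?thesis using hp(1) by blast
    qed
  qed
  then obtain \<Phi> \<Psi> where PhiPsi: "\<forall>D\<in>P. homeomorphism D D (\<Phi> D) (\<Psi> D) \<and> (\<forall>k<p. cyc (nx k) = D \<longrightarrow> \<Phi> D (ys k) = xs (nx k))"
    by metis
  have hD: "D \<in> P \<Longrightarrow> homeomorphism D D (\<Phi> D) (\<Psi> D)" for D using PhiPsi by blast
  define \<sigma> where "\<sigma> y = \<Phi> (pc y) y" for y
  define \<sigma>' where "\<sigma>' y = \<Psi> (pc y) y" for y
  have sD: "D \<in> P \<Longrightarrow> y \<in> D \<Longrightarrow> \<sigma> y = \<Phi> D y \<and> \<sigma> y \<in> D" for D y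
  proof -
    assume D: "D \<in> P" "y \<in> D"
    then have "\<sigma> y = \<Phi> D y" unfolding \<sigma>_def using pc_eq by simp
    moreover have "\<Phi> D y \<in> D" using hD[OF D(1)] D(2) unfolding homeomorphism_def by blast
    ultimately show ?thesis by simp
  qed
  have s'D: "D \<in> P \<Longrightarrow> y \<in> D \<Longrightarrow> \<sigma>' y = \<Psi> D y \<and> \<sigma>' y \<in> D" for D y
  proof -
    assume D: "D \<in> P" "y \<in> D"
    then have "\<sigma>' y = \<Psi> D y" unfolding \<sigma>'_def using pc_eq by simp
    moreover have "\<Psi> D y \<in> D" using hD[OF D(1)] D(2) unfolding homeomorphism_def by blast
    ultimately show ?thesis by simp
  qed
  have KU: "K = (\<Union>D\<in>P. D)" using PU by simp
  have hom: "homeomorphism K K \<sigma> \<sigma>'"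
  proof (rule homeomorphismI)
    show "continuous_on K \<sigma>"
      unfolding KU
    proof (rule continuous_on_closed_Union[OF Pf Pcl])
      fix D assume D: "D \<in> P"
      have "continuous_on D (\<Phi> D)" using hD[OF D] unfolding homeomorphism_def by blast
      then show "continuous_on D \<sigma>" using continuous_on_cong[of D D \<sigma> "\<Phi> D"] sD[OF D] by blast
    qed
    show "continuous_on K \<sigma>'"
      unfolding KU
    proof (rule continuous_on_closed_Union[OF Pf Pcl])
      fix D assume D: "D \<in> P"
      have "continuous_on D (\<Psi> D)" using hD[OF D] unfolding homeomorphism_def by blast
      then show "continuous_on D \<sigma>'" using continuous_on_cong[of D D \<sigma>' "\<Psi> D"] s'D[OF D] by blast
    qed
    show "\<sigma> ` K \<subseteq> K"
    proof
      fix z assume "z \<in> \<sigma> ` K"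
      then obtain y where y: "y \<in> K" "z = \<sigma> y" by blast
      then show "z \<in> K" using sD[of "pc y" y] pc[OF y(1)] PK by blast
    qed
    show "\<sigma>' ` K \<subseteq> K"
    proof
      fix z assume "z \<in> \<sigma>' ` K"
      then obtain y where y: "y \<in> K" "z = \<sigma>' y" by blast
      then show "z \<in> K" using s'D[of "pc y" y] pc[OF y(1)] PK by blast
    qed
    fix y assume y: "y \<in> K"
    then have D: "pc y \<in> P" "y \<in> pc y" using pc by auto
    have 1: "\<sigma> y = \<Phi> (pc y) y" "\<sigma> y \<in> pc y" using sD[OF D] by auto
    have "\<sigma>' (\<sigma> y) = \<Psi> (pc y) (\<sigma> y)" using s'D[OF D(1) 1(2)] by simp
    also have "\<dots> = y" using hD[OF D(1)] D(2) 1(1) unfolding homeomorphism_def by simp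
    finally show "\<sigma>' (\<sigma> y) = y" .
  next
    fix y assume y: "y \<in> K"
    then have D: "pc y \<in> P" "y \<in> pc y" using pc by auto
    have 1: "\<sigma>' y = \<Psi> (pc y) y" "\<sigma>' y \<in> pc y" using s'D[OF D] by auto
    have "\<sigma> (\<sigma>' y) = \<Phi> (pc y) (\<sigma>' y)" using sD[OF D(1) 1(2)] by simp
    also have "\<dots> = y" using hD[OF D(1)] D(2) 1(1) unfolding homeomorphism_def by simp
    finally show "\<sigma> (\<sigma>' y) = y" .
  qed
  have close: "\<forall>y\<in>K. dist y (\<sigma> y) < \<epsilon>"
  proof
    fix y assume y: "y \<in> K"
    then have D: "pc y \<in> P" "y \<in> pc y" using pc by auto
    then have "\<sigma> y \<in> pc y" using sD by blast
    then show "dist y (\<sigma> y) < \<epsilon>" using Ps[OF D(1)] D(2) unfolding small_def by blast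
  qed
  define T' where "T' = \<sigma> \<circ> T"
  have cs: "continuous_on K \<sigma>" and sK: "\<sigma> ` K = K" using hom unfolding homeomorphism_def by auto
  have cT': "continuous_on K T'" unfolding T'_def by (rule continuous_on_compose[OF cT continuous_on_subset[OF cs TK]])
  have T'K: "T' ` K \<subseteq> K" unfolding T'_def using TK sK by auto
  have T'x: "\<forall>k<p. T' (xs k) = xs (nx k)"
  proof (intro allI impI)
    fix k assume k: "k < p"
    have D: "cyc (nx k) \<in> P" using cycP nxl k by blast
    have "T' (xs k) = \<sigma> (ys k)" unfolding T'_def ys_def by simp
    also have "\<dots> = \<Phi> (cyc (nx k)) (ys k)" using sD[OF D ysC[OF k]] by simp
    also have "\<dots> = xs (nx k)" using PhiPsi D k by blast
    finally show "T' (xs k) = xs (nx k)" .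
  qed
  define g where "g y = - h (pc y)" for y
  have cg: "continuous_on K g"
    unfolding KU
  proof (rule continuous_on_closed_Union[OF Pf Pcl])
    fix D assume D: "D \<in> P"
    have "continuous_on D (\<lambda>y. - h D)" by simp
    moreover have gD: "\<And>y. y \<in> D \<Longrightarrow> g y = - h D" unfolding g_def using pc_eq[OF D] by simp
    moreover have "continuous_on D g \<longleftrightarrow> continuous_on D (\<lambda>y. - h D)"
      by (rule continuous_on_cong[OF refl]) (simp add: gD)
    ultimately show "continuous_on D g" by simp
  qed
  have ineq: "\<forall>x\<in>K. f x \<le> c + g (T' x) - g x"
  proof
    fix x assume x: "x \<in> K"
    have D1: "pc x \<in> P" "x \<in> pc x" using pc x by auto
    have TxK: "T x \<in> K" using TK x by blast
    have D2: "pc (T x) \<in> P" "T x \<in> pc (T x)" using pc TxK by auto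
    have "\<sigma> (T x) \<in> pc (T x)" using sD[OF D2] by blast
    then have "T' x \<in> pc (T x)" unfolding T'_def by simp
    then have pT: "pc (T' x) = pc (T x)" using pc_eq[OF D2(1)] by simp
    have xA: "x \<in> A (pc x) (pc (T x))" unfolding A_def using D1 D2 x by blast
    then have EE: "E (pc x) (pc (T x))" unfolding E_def using D1 D2 by blast
    have "f x \<le> wt (pc x) (pc (T x))" unfolding wt_def using mx[OF EE] xA by blast
    also have "\<dots> \<le> c + h (pc x) - h (pc (T x))" using G(5) EE by blast
    also have "\<dots> = c + g (T' x) - g x" unfolding g_def pT by simp
    finally show "f x \<le> c + g (T' x) - g x" .
  qed
  have xsK': "\<forall>k<p. xs k \<in> K" using xsK by blast
  have T'xm: "\<forall>k<p. T' (xs k) = xs (Suc k mod p)" using T'x unfolding nx_def by blast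
  define M where "M = distr (uniform_count_measure {..<p}) (restrict_space borel K) xs"
  have Minv: "M \<in> invariant_measures K T'"
    and Mint: "integral\<^sup>L M f = (\<Sum>k<p. f (xs k)) / real p"
    and Mone: "emeasure M (xs ` {..<p}) = 1"
    unfolding M_def using orbit_measure[OF G(1) xsK' xsinj T'xm cT' T'K cf cK] by auto
  have "(\<Sum>k<p. f (xs k)) = (\<Sum>k<p. wt (cyc k) (cyc (Suc k mod p)))"
    unfolding wt_def xs_def nx_def by simp
  then have "integral\<^sup>L M f = c" using Mint G(4) G(1) by simp
  then have maxM: "maximizing_measure K T' f M"
    unfolding maximizing_measure_def using Minv integral_le_subaction[OF cK cT' T'K cf cg ineq] by auto
  have iter: "(T' ^^ n) (xs 0) = xs (n mod p)" for n
  proof (induction n)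
    case 0 then show ?case by simp
  next
    case (Suc n)
    have "n mod p < p" using G(1) by simp
    then have "T' (xs (n mod p)) = xs (Suc (n mod p) mod p)" using T'xm by blast
    then show ?case using Suc by (simp add: mod_Suc_eq)
  qed
  have iter2: "n < p \<Longrightarrow> (T' ^^ n) (xs 0) = xs n" for n using iter[of n] by simp
  have "{(T' ^^ n) (xs 0) | n. n < p} = {xs n | n. n < p}"
  proof (intro Collect_cong iffI)
    fix z assume "\<exists>n. z = (T' ^^ n) (xs 0) \<and> n < p"
    then show "\<exists>n. z = xs n \<and> n < p" using iter2 by metis
  next
    fix z assume "\<exists>n. z = xs n \<and> n < p"
    then show "\<exists>n. z = (T' ^^ n) (xs 0) \<and> n < p" using iter2 by metis
  qed
  also have "\<dots> = xs ` {..<p}" by auto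
  finally have orb: "{(T' ^^ n) (xs 0) | n. n < p} = xs ` {..<p}" .
  have "supported_on_periodic_orbit K T' M"
    using orb unfolding supported_on_periodic_orbit_def using G(1) xsK iter Mone
    by (intro bexI[of _ "xs 0"] exI[of _ p]) auto
  then show ?thesis using hom close maxM unfolding T'_def by blast
qed

theorem corollary1p1:
  fixes K :: "'a::metric_space set" and T :: "'a \<Rightarrow> 'a" and f :: "'a \<Rightarrow> real" and \<epsilon> :: real
  assumes "cantor_set K" and "continuous_on K f" and "\<epsilon> > 0"
  shows "(endomorphism K T \<longrightarrow> (\<exists>T'. endomorphism K T' \<and> (\<forall>x\<in>K. dist (T x) (T' x) < \<epsilon>) \<and>
            (\<exists>M. maximizing_measure K T' f M \<and> supported_on_periodic_orbit K T' M)))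
       \<and> (homeomorphism_of K T \<longrightarrow> (\<exists>T'. homeomorphism_of K T' \<and> (\<forall>x\<in>K. dist (T x) (T' x) < \<epsilon>) \<and>
            (\<exists>M. maximizing_measure K T' f M \<and> supported_on_periodic_orbit K T' M)))"
proof (intro conjI impI)
  have cl: "cantorlike K" and Kne: "K \<noteq> {}"
    using assms(1) unfolding cantor_set_def cantorlike_def by auto
  have core: "\<exists>\<sigma> \<sigma>'. homeomorphism K K \<sigma> \<sigma>' \<and> (\<forall>x\<in>K. dist (T x) ((\<sigma> \<circ> T) x) < \<epsilon>) \<and>
      (\<exists>M. maximizing_measure K (\<sigma> \<circ> T) f M \<and> supported_on_periodic_orbit K (\<sigma> \<circ> T) M)"
    if cT: "continuous_on K T" and TK: "T ` K = K"
  proof -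
    obtain \<sigma> \<sigma>' where S: "homeomorphism K K \<sigma> \<sigma>'" "\<forall>y\<in>K. dist y (\<sigma> y) < \<epsilon>"
      "\<exists>M. maximizing_measure K (\<sigma> \<circ> T) f M \<and> supported_on_periodic_orbit K (\<sigma> \<circ> T) M"
      using main_construct[OF cl cT _ assms(2) assms(3) Kne] TK by blast
    have "\<forall>x\<in>K. dist (T x) ((\<sigma> \<circ> T) x) < \<epsilon>" using S(2) TK by auto
    then show ?thesis using S by blast
  qed
  show "\<exists>T'. endomorphism K T' \<and> (\<forall>x\<in>K. dist (T x) (T' x) < \<epsilon>) \<and>
            (\<exists>M. maximizing_measure K T' f M \<and> supported_on_periodic_orbit K T' M)"
    if en: "endomorphism K T"
  proof -
    have cT: "continuous_on K T" and TK: "T ` K = K" using en unfolding endomorphism_def by auto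
    note c = core[OF cT TK]
    obtain \<sigma> \<sigma>' where S: "homeomorphism K K \<sigma> \<sigma>'" "\<forall>x\<in>K. dist (T x) ((\<sigma> \<circ> T) x) < \<epsilon>"
      "\<exists>M. maximizing_measure K (\<sigma> \<circ> T) f M \<and> supported_on_periodic_orbit K (\<sigma> \<circ> T) M"
      using c by blast
    have cs: "continuous_on K \<sigma>" and sK: "\<sigma> ` K = K" using S(1) unfolding homeomorphism_def by auto
    have "endomorphism K (\<sigma> \<circ> T)" unfolding endomorphism_def
    proof
      show "continuous_on K (\<sigma> \<circ> T)" using continuous_on_compose[OF cT] cs TK by simp
      have "(\<sigma> \<circ> T) ` K = \<sigma> ` (T ` K)" by (rule image_comp[symmetric])
      then show "(\<sigma> \<circ> T) ` K = K" using TK sK by simp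
    qed
    then show ?thesis using S by blast
  qed
  show "\<exists>T'. homeomorphism_of K T' \<and> (\<forall>x\<in>K. dist (T x) (T' x) < \<epsilon>) \<and>
            (\<exists>M. maximizing_measure K T' f M \<and> supported_on_periodic_orbit K T' M)"
    if ho: "homeomorphism_of K T"
  proof -
    obtain gi where hT: "homeomorphism K K T gi" using ho unfolding homeomorphism_of_def by blast
    have cT: "continuous_on K T" and TK: "T ` K = K" using hT unfolding homeomorphism_def by auto
    note c = core[OF cT TK]
    obtain \<sigma> \<sigma>' where S: "homeomorphism K K \<sigma> \<sigma>'" "\<forall>x\<in>K. dist (T x) ((\<sigma> \<circ> T) x) < \<epsilon>"
      "\<exists>M. maximizing_measure K (\<sigma> \<circ> T) f M \<and> supported_on_periodic_orbit K (\<sigma> \<circ> T) M"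
      using c by blast
    have "homeomorphism K K (\<sigma> \<circ> T) (gi \<circ> \<sigma>')" by (rule homeomorphism_compose[OF hT S(1)])
    then have "homeomorphism_of K (\<sigma> \<circ> T)" unfolding homeomorphism_of_def by blast
    then show ?thesis using S by blast
  qed
qed

end
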